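(* Every semi-decomposable first-order theory $T$ is pseudo decomposable.
   Context: A first-order theory $T$ is pseudo decomposable if for every $n<\omega$ there are a model $M$ of $T$, a partition of the universe of $M$ into nonempty sets $A_0,\dots,A_{n-1}$, and automorphisms $f^1_i\neq f^2_i$ of $M$ ($i<n$) such that $f^1_i\restriction(M\setminus A_i)=f^2_i\restriction(M\setminus A_i)$ and for every choice $\eta(i)\in\{1,2\}$ ($i<n$) the map $\bigcup_{i<n}(f^{\eta(i)}_i\restriction A_i)$ is an automorphism of $M$. $T$ is semi-decomposable if for every $n<\omega$ there are a model $M$ of $T$ and a partition $\langle A_\ell:\ell<n\rangle$ of the universe of $M$ into infinite sets such that for every finite set $\Delta_1$ of formulas of $L(\tau_T)$ there is a finite set $\Delta_2$ of formulas of $L(\tau_T)$ with the following property: whenever for each $\ell<n$, $k_\ell<\omega$ and $\bar a_\ell,\bar b_\ell\in{}^{k_\ell}(A_\ell)$ realize the same $\Delta_2$-type in $M$, and $\bar a_0=\bar b_0$, then $\bar a_0\frown\bar a_1\frown\cdots\frown\bar a_{n-1}$ and $\bar b_0\frown\bar b_1\frown\cdots\frown\bar b_{n-1}$ realize the same $\Delta_1$-type in $M$. *)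

theory Defs
  imports Main
begin

datatype 'f trm = Var nat | Fn 'f "'f trm list"

datatype ('f, 'r) fm =
    Eq "'f trm" "'f trm"
  | Rel 'r "'f trm list"
  | Neg "('f, 'r) fm"
  | Conj "('f, 'r) fm" "('f, 'r) fm"
  | Ex nat "('f, 'r) fm"

fun wf_trm :: "('f \<Rightarrow> nat) \<Rightarrow> 'f trm \<Rightarrow> bool" where
  "wf_trm arf (Var n) = True"
| "wf_trm arf (Fn f ts) = (length ts = arf f \<and> (\<forall>t \<in> set ts. wf_trm arf t))"

fun wf_fm :: "('f \<Rightarrow> nat) \<Rightarrow> ('r \<Rightarrow> nat) \<Rightarrow> ('f, 'r) fm \<Rightarrow> bool" where
  "wf_fm arf arr (Eq s t) = (wf_trm arf s \<and> wf_trm arf t)"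
| "wf_fm arf arr (Rel r ts) = (length ts = arr r \<and> (\<forall>t \<in> set ts. wf_trm arf t))"
| "wf_fm arf arr (Neg p) = wf_fm arf arr p"
| "wf_fm arf arr (Conj p q) = (wf_fm arf arr p \<and> wf_fm arf arr q)"
| "wf_fm arf arr (Ex x p) = wf_fm arf arr p"

fun fv_trm :: "'f trm \<Rightarrow> nat set" where
  "fv_trm (Var n) = {n}"
| "fv_trm (Fn f ts) = (\<Union>t \<in> set ts. fv_trm t)"

fun fv :: "('f, 'r) fm \<Rightarrow> nat set" where
  "fv (Eq s t) = fv_trm s \<union> fv_trm t"
| "fv (Rel r ts) = (\<Union>t \<in> set ts. fv_trm t)"
| "fv (Neg p) = fv p"
| "fv (Conj p q) = fv p \<union> fv q"
| "fv (Ex x p) = fv p - {x}"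

record ('a, 'f, 'r) struct =
  dom :: "'a set"
  fnI :: "'f \<Rightarrow> 'a list \<Rightarrow> 'a"
  relI :: "'r \<Rightarrow> 'a list \<Rightarrow> bool"

fun eval :: "('a, 'f, 'r) struct \<Rightarrow> (nat \<Rightarrow> 'a) \<Rightarrow> 'f trm \<Rightarrow> 'a" where
  "eval M e (Var n) = e n"
| "eval M e (Fn f ts) = fnI M f (map (eval M e) ts)"

fun sat :: "('a, 'f, 'r) struct \<Rightarrow> (nat \<Rightarrow> 'a) \<Rightarrow> ('f, 'r) fm \<Rightarrow> bool" where
  "sat M e (Eq s t) = (eval M e s = eval M e t)"
| "sat M e (Rel r ts) = relI M r (map (eval M e) ts)"
| "sat M e (Neg p) = (\<not> sat M e p)"
| "sat M e (Conj p q) = (sat M e p \<and> sat M e q)"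
| "sat M e (Ex x p) = (\<exists>a \<in> dom M. sat M (e(x := a)) p)"

definition is_structure :: "('f \<Rightarrow> nat) \<Rightarrow> ('a, 'f, 'r) struct \<Rightarrow> bool" where
  "is_structure arf M \<longleftrightarrow> dom M \<noteq> {} \<and>
     (\<forall>f as. length as = arf f \<and> set as \<subseteq> dom M \<longrightarrow> fnI M f as \<in> dom M)"

definition sentence :: "('f \<Rightarrow> nat) \<Rightarrow> ('r \<Rightarrow> nat) \<Rightarrow> ('f, 'r) fm \<Rightarrow> bool" where
  "sentence arf arr p \<longleftrightarrow> wf_fm arf arr p \<and> fv p = {}"

definition fo_theory :: "('f \<Rightarrow> nat) \<Rightarrow> ('r \<Rightarrow> nat) \<Rightarrow> ('f, 'r) fm set \<Rightarrow> bool" where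
  "fo_theory arf arr T \<longleftrightarrow> (\<forall>p \<in> T. sentence arf arr p)"

definition is_model :: "('f \<Rightarrow> nat) \<Rightarrow> ('r \<Rightarrow> nat) \<Rightarrow> ('f, 'r) fm set
    \<Rightarrow> ('a, 'f, 'r) struct \<Rightarrow> bool" where
  "is_model arf arr T M \<longleftrightarrow> is_structure arf M \<and>
     (\<forall>p \<in> T. \<forall>e. range e \<subseteq> dom M \<longrightarrow> sat M e p)"

definition automorphism :: "('f \<Rightarrow> nat) \<Rightarrow> ('r \<Rightarrow> nat) \<Rightarrow> ('a, 'f, 'r) struct
    \<Rightarrow> ('a \<Rightarrow> 'a) \<Rightarrow> bool" where
  "automorphism arf arr M h \<longleftrightarrow> bij_betw h (dom M) (dom M) \<and>
     (\<forall>f as. length as = arf f \<and> set as \<subseteq> dom M \<longrightarrow> h (fnI M f as) = fnI M f (map h as)) \<and>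
     (\<forall>r as. length as = arr r \<and> set as \<subseteq> dom M \<longrightarrow> (relI M r as \<longleftrightarrow> relI M r (map h as)))"

definition is_partition :: "('a, 'f, 'r) struct \<Rightarrow> nat \<Rightarrow> (nat \<Rightarrow> 'a set) \<Rightarrow> bool" where
  "is_partition M n A \<longleftrightarrow> (\<Union>i<n. A i) = dom M \<and>
     (\<forall>i<n. \<forall>j<n. i \<noteq> j \<longrightarrow> A i \<inter> A j = {})"

definition same_type :: "('a, 'f, 'r) struct \<Rightarrow> ('f, 'r) fm set \<Rightarrow> 'a list \<Rightarrow> 'a list \<Rightarrow> bool" where
  "same_type M \<Delta> a b \<longleftrightarrow> length a = length b \<and>
     (\<forall>p \<in> \<Delta>. fv p \<subseteq> {..<length a} \<longrightarrow> (sat M (\<lambda>i. a ! i) p \<longleftrightarrow> sat M (\<lambda>i. b ! i) p))"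

definition glue :: "nat \<Rightarrow> (nat \<Rightarrow> 'a set) \<Rightarrow> (nat \<Rightarrow> 'a \<Rightarrow> 'a) \<Rightarrow> (nat \<Rightarrow> 'a \<Rightarrow> 'a)
    \<Rightarrow> nat set \<Rightarrow> 'a \<Rightarrow> 'a" where
  "glue n A f1 f2 S x =
     (if \<exists>i<n. x \<in> A i then
        (let i = (THE i. i < n \<and> x \<in> A i) in if i \<in> S then f2 i x else f1 i x)
      else x)"

text \<open>Models are taken with universe inside the type 'a (given by the itself argument).\<close>
definition pseudo_decomposable :: "'a itself \<Rightarrow> ('f \<Rightarrow> nat) \<Rightarrow> ('r \<Rightarrow> nat)
    \<Rightarrow> ('f, 'r) fm set \<Rightarrow> bool" where
  "pseudo_decomposable _ arf arr T \<longleftrightarrow>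
    (\<forall>n \<ge> 1. \<exists>(M :: ('a, 'f, 'r) struct) A f1 f2.
       is_model arf arr T M \<and> is_partition M n A \<and> (\<forall>i<n. A i \<noteq> {}) \<and>
       (\<forall>i<n. automorphism arf arr M (f1 i) \<and> automorphism arf arr M (f2 i) \<and>
              (\<exists>x \<in> dom M. f1 i x \<noteq> f2 i x) \<and>
              (\<forall>x \<in> dom M - A i. f1 i x = f2 i x)) \<and>
       (\<forall>S. automorphism arf arr M (glue n A f1 f2 S)))"

definition semi_decomposable :: "'a itself \<Rightarrow> ('f \<Rightarrow> nat) \<Rightarrow> ('r \<Rightarrow> nat)
    \<Rightarrow> ('f, 'r) fm set \<Rightarrow> bool" where
  "semi_decomposable _ arf arr T \<longleftrightarrow>
    (\<forall>n \<ge> 1. \<exists>(M :: ('a, 'f, 'r) struct) A.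
       is_model arf arr T M \<and> is_partition M n A \<and> (\<forall>i<n. infinite (A i)) \<and>
       (\<forall>\<Delta>1. finite \<Delta>1 \<and> (\<forall>p \<in> \<Delta>1. wf_fm arf arr p) \<longrightarrow>
          (\<exists>\<Delta>2. finite \<Delta>2 \<and> (\<forall>p \<in> \<Delta>2. wf_fm arf arr p) \<and>
             (\<forall>a b :: nat \<Rightarrow> 'a list.
                (\<forall>l<n. set (a l) \<subseteq> A l \<and> set (b l) \<subseteq> A l \<and> same_type M \<Delta>2 (a l) (b l))
                \<and> a 0 = b 0
                \<longrightarrow> same_type M \<Delta>1 (concat (map a [0..<n])) (concat (map b [0..<n]))))))"

end

theory Submission
  imports Defs "HOL-Library.Ramsey" "HOL-Library.Nat_Bijection"
begin


lemma finite_fv_trm: "finite (fv_trm t)"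
  by (induction t) auto

lemma finite_fv: "finite (fv p)"
  by (induction p) (auto simp: finite_fv_trm)

lemma eval_cong: "(\<forall>v\<in>fv_trm t. e v = e' v) \<Longrightarrow> eval M e t = eval M e' t"
proof (induction t)
  case (Fn f ts)
  then have "map (eval M e) ts = map (eval M e') ts" by auto
  then show ?case by (simp only: eval.simps)
qed simp

lemma sat_cong: "(\<forall>v\<in>fv p. e v = e' v) \<Longrightarrow> sat M e p = sat M e' p"
proof (induction p arbitrary: e e')
  case (Eq s t) then show ?case using eval_cong[of s e e' M] eval_cong[of t e e' M] by simp
next
  case (Rel r ts)
  then have "map (eval M e) ts = map (eval M e') ts" using eval_cong[of _ e e' M] by auto
  then show ?case by (simp only: sat.simps)
next
  case (Conj p q)
  have "sat M e p = sat M e' p" "sat M e q = sat M e' q" using Conj.prems by (auto intro!: Conj.IH)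
  then show ?case by simp
next
  case (Ex x p)
  have "sat M (e(x:=a)) p = sat M (e'(x:=a)) p" for a
    using Ex.prems by (intro Ex.IH) auto
  then show ?case by simp
qed auto

definition lenv :: "'a \<Rightarrow> 'a list \<Rightarrow> nat \<Rightarrow> 'a" where
  "lenv z a i = (if i < length a then a ! i else z)"

lemma same_type_lenv:
  "same_type M D a b \<longleftrightarrow> length a = length b \<and>
     (\<forall>p \<in> D. fv p \<subseteq> {..<length a} \<longrightarrow> (sat M (lenv z a) p \<longleftrightarrow> sat M (lenv z b) p))"
proof -
  have "fv p \<subseteq> {..<length a} \<Longrightarrow> length a = length b \<Longrightarrow>
     sat M (\<lambda>i. a ! i) p = sat M (lenv z a) p \<and> sat M (\<lambda>i. b ! i) p = sat M (lenv z b) p" for p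
    by (intro conjI sat_cong) (auto simp: lenv_def)
  then show ?thesis unfolding same_type_def by metis
qed

definition closed :: "('a,'g,'s) struct \<Rightarrow> bool" where
  "closed S \<longleftrightarrow> dom S \<noteq> {} \<and> (\<forall>f as. set as \<subseteq> dom S \<longrightarrow> fnI S f as \<in> dom S)"

lemma eval_in_dom: "closed S \<Longrightarrow> range e \<subseteq> dom S \<Longrightarrow> eval S e t \<in> dom S"
proof (induction t)
  case (Fn f ts)
  then have "set (map (eval S e) ts) \<subseteq> dom S" by auto
  then show ?case using Fn.prems(1) unfolding closed_def by simp
qed auto

lemma eval_hom:
  assumes "closed S" "range e \<subseteq> dom S"
    and hf: "\<And>f as. set as \<subseteq> dom S \<Longrightarrow> h (fnI S f as) = fnI S f (map h as)"
  shows "eval S (h \<circ> e) t = h (eval S e t)"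
proof (induction t)
  case (Fn f ts)
  have "set (map (eval S e) ts) \<subseteq> dom S" using eval_in_dom[OF assms(1,2)] by auto
  then have "h (fnI S f (map (eval S e) ts)) = fnI S f (map h (map (eval S e) ts))" by (rule hf)
  moreover have "map (eval S (h \<circ> e)) ts = map h (map (eval S e) ts)" using Fn by (auto simp: comp_def)
  ultimately show ?case by (simp only: eval.simps)
qed simp

lemma sat_hom:
  assumes "closed S" and bij: "bij_betw h (dom S) (dom S)"
    and hf: "\<And>f as. set as \<subseteq> dom S \<Longrightarrow> h (fnI S f as) = fnI S f (map h as)"
    and hr: "\<And>r as. set as \<subseteq> dom S \<Longrightarrow> relI S r (map h as) = relI S r as"
  shows "range e \<subseteq> dom S \<Longrightarrow> sat S (h \<circ> e) p = sat S e p"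
proof (induction p arbitrary: e)
  case (Eq s t)
  have "inj_on h (dom S)" using bij bij_betw_def by blast
  moreover have "eval S (h \<circ> e) s = h (eval S e s)" "eval S (h \<circ> e) t = h (eval S e t)"
    using eval_hom[OF assms(1) Eq hf] by auto
  moreover have "h (eval S e s) = h (eval S e t) \<longleftrightarrow> eval S e s = eval S e t"
    using eval_in_dom[OF assms(1) Eq] \<open>inj_on h (dom S)\<close> by (auto simp: inj_on_eq_iff)
  ultimately show ?case by (simp only: sat.simps)
next
  case (Rel r ts)
  have "set (map (eval S e) ts) \<subseteq> dom S" using eval_in_dom[OF assms(1) Rel] by auto
  moreover have "map (eval S (h \<circ> e)) ts = map h (map (eval S e) ts)"
    using eval_hom[OF assms(1) Rel hf] by auto
  ultimately show ?case using hr[of "map (eval S e) ts"] by (simp only: sat.simps)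
next
  case (Ex x p)
  have eq: "(h \<circ> e)(x := a) = (h \<circ> (e(x:=b)))" if "a = h b" for a b using that by auto
  show ?case
  proof
    assume "sat S (h \<circ> e) (fm.Ex x p)"
    then obtain a where a: "a \<in> dom S" "sat S ((h \<circ> e)(x:=a)) p" by auto
    then obtain b where b: "b \<in> dom S" "a = h b" using bij by (metis bij_betw_def imageE)
    have "range (e(x:=b)) \<subseteq> dom S" using Ex.prems b by auto
    then have "sat S (e(x:=b)) p" using a(2)[unfolded eq[OF b(2)]] Ex.IH[of "e(x:=b)"] by blast
    then show "sat S e (fm.Ex x p)" using b(1) by (meson sat.simps(5))
  next
    assume "sat S e (fm.Ex x p)"
    then obtain b where b: "b \<in> dom S" "sat S (e(x:=b)) p" by auto
    have "range (e(x:=b)) \<subseteq> dom S" using Ex.prems b by auto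
    then have "sat S (h \<circ> (e(x:=b))) p" using b Ex.IH[of "e(x:=b)"] by blast
    then have "sat S ((h \<circ> e)(x:=h b)) p" unfolding eq[of "h b" b, OF refl] .
    moreover have "h b \<in> dom S" using b bij by (metis bij_betw_apply)
    ultimately show "sat S (h \<circ> e) (fm.Ex x p)" by auto
  qed
qed auto


section \<open>Ultrafilters\<close>

definition ultra :: "'i filter \<Rightarrow> bool" where
  "ultra U \<longleftrightarrow> U \<noteq> bot \<and> (\<forall>P. eventually P U \<or> eventually (\<lambda>x. \<not> P x) U)"

lemma ultra_not: "ultra U \<Longrightarrow> eventually (\<lambda>x. \<not> P x) U \<longleftrightarrow> \<not> eventually P U"
proof
  assume u: "ultra U" and n: "eventually (\<lambda>x. \<not> P x) U"
  show "\<not> eventually P U"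
  proof
    assume "eventually P U"
    with n have "eventually (\<lambda>x. False) U" by (rule eventually_elim2) auto
    with u show False by (simp add: ultra_def)
  qed
qed (auto simp: ultra_def)

lemma ultra_iff:
  assumes "ultra U"
  shows "eventually (\<lambda>x. P x \<longleftrightarrow> Q x) U \<longleftrightarrow> (eventually P U \<longleftrightarrow> eventually Q U)"
proof
  assume h: "eventually (\<lambda>x. P x \<longleftrightarrow> Q x) U"
  show "eventually P U \<longleftrightarrow> eventually Q U"
  proof
    assume "eventually P U"
    with h show "eventually Q U" by (rule eventually_elim2) auto
  next
    assume "eventually Q U"
    with h show "eventually P U" by (rule eventually_elim2) auto
  qed
next
  assume h: "eventually P U \<longleftrightarrow> eventually Q U"
  show "eventually (\<lambda>x. P x \<longleftrightarrow> Q x) U"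
  proof (cases "eventually P U")
    case True
    then have "eventually Q U" using h by blast
    with True show ?thesis by (rule eventually_elim2) auto
  next
    case False
    then have "eventually (\<lambda>x. \<not> P x) U" "eventually (\<lambda>x. \<not> Q x) U"
      using h assms ultra_not by blast+
    then show ?thesis by (rule eventually_elim2) auto
  qed
qed

lemma ultra_ex_finite:
  assumes "ultra U"
  shows "eventually (\<lambda>x. \<exists>k<(N::nat). P k x) U \<Longrightarrow> \<exists>k<N. eventually (P k) U"
proof (induction N)
  case 0
  then show ?case using assms by (simp add: ultra_def)
next
  case (Suc N)
  show ?case
  proof (cases "eventually (P N) U")
    case True then show ?thesis by auto
  next
    case False
    then have "eventually (\<lambda>x. \<not> P N x) U" using assms ultra_not by blast
    then have "eventually (\<lambda>x. \<exists>k<N. P k x) U"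
      using Suc.prems by (rule eventually_elim2) (auto simp: less_Suc_eq)
    then show ?thesis using Suc.IH less_Suc_eq by blast
  qed
qed

lemma ex_ultra:
  fixes F :: "'a filter"
  assumes F: "F \<noteq> bot"
  shows "\<exists>U\<le>F. ultra U"
proof -
  let ?R = "{(b, a). a \<noteq> bot \<and> a \<le> b \<and> b \<le> F}"
  have bot_notin_R: "c \<in> Chains ?R \<Longrightarrow> bot \<notin> c" for c
    by (auto simp: Chains_def)
  have [simp]: "Field ?R = {G. G \<noteq> bot \<and> G \<le> F}"
    by (auto simp: Field_def bot_unique)
  have "\<exists>m\<in>Field ?R. \<forall>a\<in>Field ?R. (m, a) \<in> ?R \<longrightarrow> a = m"
  proof (rule Zorns_po_lemma)
    show "Partial_order ?R"
      by (auto simp: partial_order_on_def preorder_on_def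
          antisym_def refl_on_def trans_def Field_def bot_unique)
    show "\<exists>u\<in>Field ?R. \<forall>a\<in>C. (a, u) \<in> ?R" if C: "C \<in> Chains ?R" for C
    proof (simp, intro exI conjI ballI)
      have Inf_C: "Inf C \<noteq> bot" "Inf C \<le> F" if "C \<noteq> {}"
      proof -
        from C that have "Inf C = bot \<longleftrightarrow> (\<exists>x\<in>C. x = bot)"
          unfolding trivial_limit_def by (intro eventually_Inf_base) (auto simp: Chains_def)
        with C show "Inf C \<noteq> bot"
          by (simp add: bot_notin_R)
        from that obtain x where "x \<in> C" by auto
        with C show "Inf C \<le> F"
          by (auto intro!: Inf_lower2[of x] simp: Chains_def)
      qed
      then have [simp]: "inf F (Inf C) = (if C = {} then F else Inf C)"
        using C by (auto simp add: inf_absorb2)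
      from C show "inf F (Inf C) \<noteq> bot"
        by (simp add: F Inf_C)
      from C show "inf F (Inf C) \<le> F"
        by (simp add: Chains_def Inf_C F)
      with C show "inf F (Inf C) \<le> x" "x \<le> F" if "x \<in> C" for x
        using that by (auto intro: Inf_lower simp: Chains_def)
    qed
  qed
  then obtain U where U: "U \<noteq> bot" "U \<le> F" and mx: "\<And>a. a \<noteq> bot \<Longrightarrow> a \<le> U \<Longrightarrow> U \<le> F \<Longrightarrow> a = U"
    by auto
  have max: "U = G" if "G \<noteq> bot" "G \<le> U" for G
    using mx[of G] that U(2) by auto
  have "ultra U" unfolding ultra_def
  proof (intro conjI allI U(1) disjCI)
    fix P assume nn: "\<not> eventually (\<lambda>x. \<not> P x) U"
    have "inf U (principal {x. P x}) \<noteq> bot"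
      using nn by (simp add: trivial_limit_def eventually_inf_principal)
    then have UE: "U = inf U (principal {x. P x})" by (rule max) simp
    show "eventually P U"
      by (subst UE) (simp add: eventually_inf_principal)
  qed
  with U show ?thesis by auto
qed

section \<open>Ultraproducts\<close>

definition PI :: "('a,'g,'s) struct \<Rightarrow> ('i \<Rightarrow> 'a) set" where
  "PI M0 = {x. \<forall>i. x i \<in> dom M0}"

definition rep :: "('a,'g,'s) struct \<Rightarrow> 'i filter \<Rightarrow> ('i \<Rightarrow> 'a) \<Rightarrow> ('i \<Rightarrow> 'a)" where
  "rep M0 U x = (SOME y. y \<in> PI M0 \<and> eventually (\<lambda>i. y i = x i) U)"

definition up :: "('a,'g,'s) struct \<Rightarrow> 'i filter \<Rightarrow> ('i \<Rightarrow> 'a, 'g, 's) struct" where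
  "up M0 U = \<lparr>dom = rep M0 U ` PI M0,
     fnI = \<lambda>f as. rep M0 U (\<lambda>i. fnI M0 f (map (\<lambda>a. a i) as)),
     relI = \<lambda>r as. eventually (\<lambda>i. relI M0 r (map (\<lambda>a. a i) as)) U\<rparr>"

lemma rep_props: "x \<in> PI M0 \<Longrightarrow> rep M0 U x \<in> PI M0 \<and> eventually (\<lambda>i. rep M0 U x i = x i) U"
  unfolding rep_def by (rule someI[of _ x]) auto

lemma rep_cong: "eventually (\<lambda>i. x i = y i) U \<Longrightarrow> rep M0 U x = rep M0 U y"
proof -
  assume h: "eventually (\<lambda>i. x i = y i) U"
  have "(\<lambda>z. z \<in> PI M0 \<and> eventually (\<lambda>i. z i = x i) U) = (\<lambda>z. z \<in> PI M0 \<and> eventually (\<lambda>i. z i = y i) U)"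
  proof (intro ext iffI conjI)
    fix z assume "z \<in> PI M0 \<and> eventually (\<lambda>i. z i = x i) U"
    then show "eventually (\<lambda>i. z i = y i) U" using h by (auto elim: eventually_elim2)
  next
    fix z assume "z \<in> PI M0 \<and> eventually (\<lambda>i. z i = y i) U"
    then show "eventually (\<lambda>i. z i = x i) U" using h by (auto elim: eventually_elim2)
  qed auto
  then show ?thesis unfolding rep_def by simp
qed

lemma up_dom_PI: "dom (up M0 U) \<subseteq> PI M0"
  using rep_props unfolding up_def by auto

lemma rep_in_up: "x \<in> PI M0 \<Longrightarrow> rep M0 U x \<in> dom (up M0 U)"
  unfolding up_def by auto

lemma rep_idem: "p \<in> dom (up M0 U) \<Longrightarrow> rep M0 U p = p"
proof -
  assume "p \<in> dom (up M0 U)"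
  then obtain x where x: "x \<in> PI M0" "p = rep M0 U x" unfolding up_def by auto
  have ev: "eventually (\<lambda>i. p i = x i) U" using rep_props[OF x(1)] x(2) by simp
  show "rep M0 U p = p" using rep_cong[OF ev] x(2) by simp
qed

lemma up_eq_iff:
  assumes "p \<in> dom (up M0 U)" "q \<in> dom (up M0 U)"
  shows "p = q \<longleftrightarrow> eventually (\<lambda>i. p i = q i) U"
proof
  assume "eventually (\<lambda>i. p i = q i) U"
  then have "rep M0 U p = rep M0 U q" by (rule rep_cong)
  then show "p = q" using rep_idem assms by metis
qed simp

lemma PI_dom: "x \<in> PI M0 \<Longrightarrow> x i \<in> dom M0"
  unfolding PI_def by auto

lemma up_closed:
  assumes "closed M0"
  shows "closed (up M0 U)"
proof -
  obtain a where "a \<in> dom M0" using assms unfolding closed_def by blast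
  then have "(\<lambda>i. a) \<in> PI M0" by (simp add: PI_def)
  then have "dom (up M0 U) \<noteq> {}" using rep_in_up by blast
  moreover have "fnI (up M0 U) f as \<in> dom (up M0 U)" if "set as \<subseteq> dom (up M0 U)" for f as
  proof -
    have "set (map (\<lambda>a. a i) as) \<subseteq> dom M0" for i
      using that up_dom_PI[of M0 U] unfolding PI_def by auto
    then have "(\<lambda>i. fnI M0 f (map (\<lambda>a. a i) as)) \<in> PI M0"
      using assms unfolding closed_def PI_def by blast
    then show ?thesis by (simp add: up_def rep_in_up[simplified up_def])
  qed
  ultimately show ?thesis by (simp add: closed_def)
qed

lemma los_eval:
  assumes "closed M0" "range e \<subseteq> dom (up M0 U)"
  shows "eventually (\<lambda>i. eval (up M0 U) e t i = eval M0 (\<lambda>v. e v i) t) U"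
proof (induction t)
  case (Var x)
  then show ?case by simp
next
  case (Fn f ts)
  have ev1: "eventually (\<lambda>i. \<forall>t\<in>set ts. eval (up M0 U) e t i = eval M0 (\<lambda>v. e v i) t) U"
    using Fn by (intro eventually_ball_finite) auto
  have "set (map (eval (up M0 U) e) ts) \<subseteq> PI M0"
    using eval_in_dom[OF up_closed[OF assms(1)] assms(2)] up_dom_PI by auto
  then have si: "set (map (\<lambda>a. a i) (map (eval (up M0 U) e) ts)) \<subseteq> dom M0" for i
    unfolding PI_def by auto
  define X where "X = (\<lambda>i. fnI M0 f (map (\<lambda>a. a i) (map (eval (up M0 U) e) ts)))"
  have "X \<in> PI M0"
    using assms(1) si unfolding closed_def PI_def X_def by blast
  then have ev2: "eventually (\<lambda>i. rep M0 U X i = X i) U" using rep_props by blast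
  have ee: "eval (up M0 U) e (Fn f ts) = rep M0 U X" unfolding X_def by (simp add: up_def)
  show ?case using ev1 ev2 unfolding ee
  proof (rule eventually_elim2)
    fix i assume h1: "\<forall>t\<in>set ts. eval (up M0 U) e t i = eval M0 (\<lambda>v. e v i) t"
      and h2: "rep M0 U X i = X i"
    have "map (\<lambda>a. a i) (map (eval (up M0 U) e) ts) = map (eval M0 (\<lambda>v. e v i)) ts"
      using h1 by simp
    then have "X i = fnI M0 f (map (eval M0 (\<lambda>v. e v i)) ts)" unfolding X_def by (simp only:)
    then show "rep M0 U X i = eval M0 (\<lambda>v. e v i) (Fn f ts)" using h2 by simp
  qed
qed

lemma los:
  assumes "closed M0" "ultra U" "range e \<subseteq> dom (up M0 U)"
  shows "sat (up M0 U) e p \<longleftrightarrow> eventually (\<lambda>i. sat M0 (\<lambda>v. e v i) p) U"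
  using assms(3)
proof (induction p arbitrary: e)
  case (Eq s t)
  have d: "eval (up M0 U) e s \<in> dom (up M0 U)" "eval (up M0 U) e t \<in> dom (up M0 U)"
    using eval_in_dom[OF up_closed[OF assms(1)] Eq] by auto
  have "sat (up M0 U) e (Eq s t) \<longleftrightarrow> eventually (\<lambda>i. eval (up M0 U) e s i = eval (up M0 U) e t i) U"
    using up_eq_iff[OF d] by simp
  also have "\<dots> \<longleftrightarrow> eventually (\<lambda>i. sat M0 (\<lambda>v. e v i) (Eq s t)) U"
  proof -
    have "eventually (\<lambda>i. (eval (up M0 U) e s i = eval (up M0 U) e t i) \<longleftrightarrow> sat M0 (\<lambda>v. e v i) (Eq s t)) U"
      using los_eval[OF assms(1) Eq, of s] los_eval[OF assms(1) Eq, of t]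
      by (rule eventually_elim2) simp
    then show ?thesis using ultra_iff[OF assms(2)] by blast
  qed
  finally show ?case .
next
  case (Rel r ts)
  have "eventually (\<lambda>i. \<forall>t\<in>set ts. eval (up M0 U) e t i = eval M0 (\<lambda>v. e v i) t) U"
    using los_eval[OF assms(1) Rel] by (intro eventually_ball_finite) auto
  then have "eventually (\<lambda>i. relI M0 r (map (\<lambda>a. a i) (map (eval (up M0 U) e) ts)) \<longleftrightarrow> sat M0 (\<lambda>v. e v i) (Rel r ts)) U"
    by (rule eventually_mono) (simp add: comp_def cong: map_cong)
  then show ?case using ultra_iff[OF assms(2)] by (simp add: up_def)
next
  case (Neg p)
  then show ?case using ultra_not[OF assms(2)] by simp
next
  case (Conj p q)
  then show ?case by (simp add: eventually_conj_iff)
next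
  case (Ex x p)
  show ?case
  proof
    assume "sat (up M0 U) e (fm.Ex x p)"
    then obtain a where a: "a \<in> dom (up M0 U)" "sat (up M0 U) (e(x:=a)) p" by auto
    moreover have "range (e(x:=a)) \<subseteq> dom (up M0 U)" using a Ex.prems by auto
    ultimately have "eventually (\<lambda>i. sat M0 (\<lambda>v. (e(x:=a)) v i) p) U"
      using Ex.IH[of "e(x:=a)"] by blast
    moreover have "a i \<in> dom M0" for i by (meson PI_dom a(1) subsetD up_dom_PI)
    moreover have eq: "(\<lambda>v. (e(x:=a)) v i) = (\<lambda>v. e v i)(x := a i)" for i by auto
    ultimately show "eventually (\<lambda>i. sat M0 (\<lambda>v. e v i) (fm.Ex x p)) U"
    proof (elim eventually_mono)
      fix i assume "sat M0 (\<lambda>v. (e(x:=a)) v i) p"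
      then have "sat M0 ((\<lambda>v. e v i)(x := a i)) p" unfolding eq .
      then show "sat M0 (\<lambda>v. e v i) (fm.Ex x p)" using \<open>\<And>i. a i \<in> dom M0\<close> by auto
    qed
  next
    assume h: "eventually (\<lambda>i. sat M0 (\<lambda>v. e v i) (fm.Ex x p)) U"
    obtain d where d: "d \<in> dom M0" using assms(1) unfolding closed_def by blast
    define w where "w i = (if \<exists>b\<in>dom M0. sat M0 ((\<lambda>v. e v i)(x:=b)) p
       then SOME b. b \<in> dom M0 \<and> sat M0 ((\<lambda>v. e v i)(x:=b)) p else d)" for i
    have w: "w i \<in> dom M0" for i unfolding w_def using d by (auto intro: someI2_ex)
    have w2: "eventually (\<lambda>i. sat M0 ((\<lambda>v. e v i)(x:=w i)) p) U"
      using h by (rule eventually_mono) (auto simp: w_def intro: someI2_ex)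
    let ?a = "rep M0 U w"
    have wPI: "w \<in> PI M0" using w by (simp add: PI_def)
    have a: "?a \<in> dom (up M0 U)" using rep_in_up[OF wPI] .
    have "eventually (\<lambda>i. ?a i = w i) U" using rep_props[OF wPI] by blast
    then have "eventually (\<lambda>i. sat M0 (\<lambda>v. (e(x:=?a)) v i) p) U"
      using w2
    proof (rule eventually_elim2)
      fix i assume "?a i = w i" "sat M0 ((\<lambda>v. e v i)(x:=w i)) p"
      moreover have "(\<lambda>v. (e(x:=?a)) v i) = (\<lambda>v. e v i)(x:=?a i)" by auto
      ultimately show "sat M0 (\<lambda>v. (e(x:=?a)) v i) p" by simp
    qed
    moreover have "range (e(x:=?a)) \<subseteq> dom (up M0 U)" using a Ex.prems by auto
    ultimately have "sat (up M0 U) (e(x:=?a)) p" using Ex.IH[of "e(x:=?a)"] by blast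
    then show "sat (up M0 U) e (fm.Ex x p)" using a by auto
  qed
qed


section \<open>Indiscernibles via Ramsey\<close>

definition lv :: "nat \<Rightarrow> nat" where "lv v = fst (prod_decode v)"
definition qv :: "nat \<Rightarrow> int" where "qv v = int_decode (snd (prod_decode v))"
definition vc :: "nat \<Rightarrow> int \<Rightarrow> nat" where "vc l q = prod_encode (l, int_encode q)"

lemma lv_vc[simp]: "lv (vc l q) = l" and qv_vc[simp]: "qv (vc l q) = q"
  by (simp_all add: lv_def qv_def vc_def)

definition ienv :: "(nat \<Rightarrow> nat \<Rightarrow> 'a) \<Rightarrow> (int \<Rightarrow> nat) \<Rightarrow> nat \<Rightarrow> 'a" where
  "ienv c J v = c (lv v) (J (qv v))"

definition Qs :: "('g,'s) fm \<Rightarrow> int set" where "Qs p = qv ` fv p"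

definition indisc :: "('a,'g,'s) struct \<Rightarrow> (nat \<Rightarrow> nat \<Rightarrow> 'a) \<Rightarrow> ('g,'s) fm \<Rightarrow> bool" where
  "indisc K c p \<longleftrightarrow> (\<forall>J J'. strict_mono_on (Qs p) J \<and> strict_mono_on (Qs p) J' \<longrightarrow>
      (sat K (ienv c J) p \<longleftrightarrow> sat K (ienv c J') p))"

lemma sorted_img:
  fixes J :: "'x::linorder \<Rightarrow> 'y::linorder"
  assumes "finite Q" "strict_mono_on Q J"
  shows "sorted_list_of_set (J ` Q) = map J (sorted_list_of_set Q)"
proof -
  have inj: "inj_on J Q" using assms(2) strict_mono_on_imp_inj_on by blast
  have "sorted_wrt (<) (map J (sorted_list_of_set Q))"
    unfolding sorted_wrt_map
    using sorted_wrt_mono_rel[of "sorted_list_of_set Q" "(<)" "\<lambda>x y. J x < J y"]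
    using assms by (simp add: strict_mono_on_def)
  moreover have "set (map J (sorted_list_of_set Q)) = J ` Q" using assms by simp
  moreover have "length (map J (sorted_list_of_set Q)) = card (J ` Q)"
    using assms inj by (simp add: card_image)
  ultimately show ?thesis
    using sorted_list_of_set_unique[of "J ` Q" "map J (sorted_list_of_set Q)"] assms by auto
qed

definition idx :: "'x list \<Rightarrow> 'x \<Rightarrow> nat" where
  "idx xs q = (LEAST k. k < length xs \<and> xs ! k = q)"

lemma idx_props: "q \<in> set xs \<Longrightarrow> idx xs q < length xs \<and> xs ! idx xs q = q"
  unfolding idx_def by (rule LeastI_ex) (simp add: in_set_conv_nth)

definition isoJ :: "'x::linorder set \<Rightarrow> 'y::linorder set \<Rightarrow> 'x \<Rightarrow> 'y" where
  "isoJ Q X q = sorted_list_of_set X ! idx (sorted_list_of_set Q) q"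

lemma isoJ_eq:
  assumes "finite Q" "strict_mono_on Q J" "q \<in> Q"
  shows "isoJ Q (J ` Q) q = J q"
proof -
  have "q \<in> set (sorted_list_of_set Q)" using assms by simp
  then have "idx (sorted_list_of_set Q) q < length (sorted_list_of_set Q)"
    "sorted_list_of_set Q ! idx (sorted_list_of_set Q) q = q" using idx_props[OF \<open>q \<in> set _\<close>] by auto
  then show ?thesis unfolding isoJ_def sorted_img[OF assms(1,2)] by simp
qed

definition homog :: "('a,'g,'s) struct \<Rightarrow> (nat \<Rightarrow> nat \<Rightarrow> 'a) \<Rightarrow> ('g,'s) fm \<Rightarrow> nat set \<Rightarrow> bool" where
  "homog K c p Y \<longleftrightarrow> (\<forall>J J'. strict_mono_on (Qs p) J \<and> J ` Qs p \<subseteq> Y \<and>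
      strict_mono_on (Qs p) J' \<and> J' ` Qs p \<subseteq> Y \<longrightarrow>
      (sat K (ienv c J) p \<longleftrightarrow> sat K (ienv c J') p))"

lemma homog_mono:
  assumes "homog K c p Y" "Z \<subseteq> Y"
  shows "homog K c p Z"
  unfolding homog_def
proof (intro allI impI, elim conjE)
  fix J J' assume a: "strict_mono_on (Qs p) J" "J ` Qs p \<subseteq> Z" "strict_mono_on (Qs p) J'" "J' ` Qs p \<subseteq> Z"
  have H: "strict_mono_on (Qs p) J \<and> J ` Qs p \<subseteq> Y \<and> strict_mono_on (Qs p) J' \<and> J' ` Qs p \<subseteq> Y \<longrightarrow>
      (sat K (ienv c J) p \<longleftrightarrow> sat K (ienv c J') p)"
    using assms(1) unfolding homog_def by (rule spec[of _ J', OF spec[of _ J]])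
  show "sat K (ienv c J) p = sat K (ienv c J') p"
    using H a assms(2) by auto
qed

lemma homog_step:
  fixes c :: "nat \<Rightarrow> nat \<Rightarrow> 'a" and Z :: "nat set"
  assumes "infinite Z"
  shows "\<exists>Y\<subseteq>Z. infinite Y \<and> homog K c p Y"
proof -
  let ?Q = "Qs p"
  have fQ: "finite ?Q" unfolding Qs_def using finite_fv by blast
  define f where "f X = (if sat K (ienv c (isoJ ?Q X)) p then 1 else (0::nat))" for X
  have bnd: "\<forall>X. X \<subseteq> Z \<and> finite X \<and> card X = card ?Q \<longrightarrow> f X < 2" by (simp add: f_def)
  obtain Y t where Y: "Y \<subseteq> Z" "infinite Y" "t < 2"
    and col: "\<forall>X. X \<subseteq> Y \<and> finite X \<and> card X = card ?Q \<longrightarrow> f X = t"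
    using Ramsey[OF assms bnd] by blast
  have key: "sat K (ienv c J) p \<longleftrightarrow> t = 1" if J: "strict_mono_on ?Q J" "J ` ?Q \<subseteq> Y" for J
  proof -
    have "card (J ` ?Q) = card ?Q"
      using J strict_mono_on_imp_inj_on card_image by blast
    then have "f (J ` ?Q) = t" using col J fQ by auto
    moreover have "sat K (ienv c J) p = sat K (ienv c (isoJ ?Q (J ` ?Q))) p"
    proof (rule sat_cong, intro ballI)
      fix v assume "v \<in> fv p"
      then have "qv v \<in> ?Q" by (simp add: Qs_def)
      then show "ienv c J v = ienv c (isoJ ?Q (J ` ?Q)) v" using isoJ_eq[OF fQ J(1)] by (simp add: ienv_def)
    qed
    ultimately show ?thesis unfolding f_def by (auto split: if_splits)
  qed
  have "homog K c p Y" unfolding homog_def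
  proof (intro allI impI, elim conjE)
    fix J J' assume a: "strict_mono_on (Qs p) J" "J ` Qs p \<subseteq> Y" "strict_mono_on (Qs p) J'" "J' ` Qs p \<subseteq> Y"
    show "sat K (ienv c J) p = sat K (ienv c J') p" using key[OF a(1,2)] key[OF a(3,4)] by simp
  qed
  then show ?thesis using Y by blast
qed

lemma homog_finite:
  fixes c :: "nat \<Rightarrow> nat \<Rightarrow> 'a"
  assumes "finite P"
  shows "\<exists>Y. infinite Y \<and> (\<forall>p\<in>P. homog K c p Y)"
  using assms
proof (induction P rule: finite_induct)
  case empty
  then show ?case by (intro exI[of _ UNIV]) auto
next
  case (insert p P)
  then obtain Y where Y: "infinite Y" "\<forall>p\<in>P. homog K c p Y" by blast
  obtain Y' where Y': "Y' \<subseteq> Y" "infinite Y'" "homog K c p Y'" using homog_step[OF Y(1), of K c p] by blast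
  have "\<forall>p\<in>P. homog K c p Y'" using Y(2) Y'(1) homog_mono by blast
  then show ?case using Y' by blast
qed

lemma indisc_exists:
  fixes c :: "nat \<Rightarrow> nat \<Rightarrow> 'a"
  assumes "finite P"
  shows "\<exists>s. strict_mono s \<and> (\<forall>p\<in>P. indisc K (\<lambda>l j. c l (s j)) p)"
proof -
  obtain Y where Y: "infinite Y" "\<forall>p\<in>P. homog K c p Y" using homog_finite[OF assms] by blast
  let ?s = "enumerate Y"
  have sm: "strict_mono ?s" using strict_mono_enumerate[OF Y(1)] .
  have "indisc K (\<lambda>l j. c l (?s j)) p" if "p \<in> P" for p
    unfolding indisc_def
  proof (intro allI impI)
    fix J J' :: "int \<Rightarrow> nat" assume JJ: "strict_mono_on (Qs p) J \<and> strict_mono_on (Qs p) J'"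
    have e: "ienv (\<lambda>l j. c l (?s j)) K' = ienv c (?s \<circ> K')" for K' :: "int \<Rightarrow> nat" by (auto simp: ienv_def)
    have sm2: "strict_mono_on (Qs p) (?s \<circ> K')" if "strict_mono_on (Qs p) K'" for K' :: "int \<Rightarrow> nat"
      using that sm by (auto simp: strict_mono_on_def strict_mono_def)
    have im: "(?s \<circ> K') ` Qs p \<subseteq> Y" for K' :: "int \<Rightarrow> nat" using range_enumerate[OF Y(1)] by auto
    show "sat K (ienv (\<lambda>l j. c l (?s j)) J) p = sat K (ienv (\<lambda>l j. c l (?s j)) J') p"
      unfolding e using Y(2) that JJ sm2 im unfolding homog_def by blast
  qed
  then show ?thesis using sm by blast
qed


type_synonym ('f,'r) sf = "'f + nat \<times> ('f,'r) fm"

fun tsubst :: "(nat \<Rightarrow> 'g trm) \<Rightarrow> 'g trm \<Rightarrow> 'g trm" where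
  "tsubst s (Var v) = s v"
| "tsubst s (Fn f ts) = Fn f (map (tsubst s) ts)"

lemma eval_tsubst: "eval S e (tsubst s t) = eval S (\<lambda>v. eval S e (s v)) t"
proof (induction t)
  case (Fn f ts)
  have "map (eval S e) (map (tsubst s) ts) = map (eval S (\<lambda>v. eval S e (s v))) ts"
    using Fn by simp
  then show ?case by (simp only: tsubst.simps eval.simps)
qed simp

definition lift :: "('f,'r) fm \<Rightarrow> (('f,'r) sf, 'r + nat) fm" where
  "lift = map_fm Inl Inl"

lemma lift_simps[simp]:
  "lift (Eq s t) = Eq (map_trm Inl s) (map_trm Inl t)"
  "lift (Rel r ts) = Rel (Inl r) (map (map_trm Inl) ts)"
  "lift (Neg p) = Neg (lift p)"
  "lift (Conj p q) = Conj (lift p) (lift q)"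
  "lift (Ex x p) = Ex x (lift p)"
  by (simp_all add: lift_def)

locale cons =
  fixes arf :: "'f \<Rightarrow> nat" and arr :: "'r \<Rightarrow> nat" and M :: "('a,'f,'r) struct"
    and A :: "nat \<Rightarrow> 'a set" and n :: nat
  assumes n1: "1 \<le> n" and strM: "is_structure arf M"
    and part: "is_partition M (Suc n) A" and infA: "\<forall>i<Suc n. infinite (A i)"
begin

definition d0 where "d0 = (SOME x. x \<in> dom M)"

lemma domM_ne: "dom M \<noteq> {}" using strM by (simp add: is_structure_def)

lemma d0: "d0 \<in> dom M" unfolding d0_def using domM_ne by (simp add: some_in_eq)

lemma A_sub: "l < Suc n \<Longrightarrow> A l \<subseteq> dom M"
  using part unfolding is_partition_def by blast

lemma dom_A: "x \<in> dom M \<Longrightarrow> \<exists>l<Suc n. x \<in> A l"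
  using part unfolding is_partition_def by blast

lemma A_disj: "l < Suc n \<Longrightarrow> l' < Suc n \<Longrightarrow> l \<noteq> l' \<Longrightarrow> A l \<inter> A l' = {}"
  using part unfolding is_partition_def by blast

definition M1 :: "('a,'f,'r) struct" where
  "M1 = \<lparr>dom = dom M, fnI = \<lambda>f as. if length as = arf f \<and> set as \<subseteq> dom M then fnI M f as else d0,
     relI = relI M\<rparr>"

lemma M1_simps[simp]: "dom M1 = dom M" "relI M1 = relI M" by (simp_all add: M1_def)

lemma M1_closed: "closed M1"
  using strM d0 domM_ne unfolding closed_def M1_def is_structure_def by auto

lemma eval_M1: "wf_trm arf t \<Longrightarrow> range e \<subseteq> dom M \<Longrightarrow> eval M1 e t = eval M e t \<and> eval M e t \<in> dom M"
proof (induction t)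
  case (Fn f ts)
  have h: "\<forall>t\<in>set ts. eval M1 e t = eval M e t \<and> eval M e t \<in> dom M" using Fn by auto
  then have m: "map (eval M1 e) ts = map (eval M e) ts" by simp
  have s: "set (map (eval M e) ts) \<subseteq> dom M" using h by auto
  have l: "length (map (eval M e) ts) = arf f" using Fn.prems by simp
  have "fnI M f (map (eval M e) ts) \<in> dom M" using strM s l unfolding is_structure_def by blast
  moreover have "eval M1 e (Fn f ts) = fnI M1 f (map (eval M e) ts)" by (simp only: eval.simps m)
  moreover have "fnI M1 f (map (eval M e) ts) = fnI M f (map (eval M e) ts)"
    using s l by (simp add: M1_def)
  ultimately show ?case by simp
qed auto

lemma sat_M1: "wf_fm arf arr p \<Longrightarrow> range e \<subseteq> dom M \<Longrightarrow> sat M1 e p = sat M e p"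
proof (induction p arbitrary: e)
  case (Eq s t)
  then show ?case using eval_M1[of s e] eval_M1[of t e] by simp
next
  case (Rel r ts)
  then have "map (eval M1 e) ts = map (eval M e) ts" using eval_M1 by auto
  then show ?case by (simp only: sat.simps M1_simps)
next
  case (Ex x p)
  have "sat M1 (e(x:=b)) p = sat M (e(x:=b)) p" if "b \<in> dom M" for b
  proof -
    have "range (e(x:=b)) \<subseteq> dom M" using Ex.prems(2) that by auto
    then show ?thesis using Ex.IH Ex.prems(1) by simp
  qed
  then show ?case by simp
qed auto

definition skf :: "nat \<Rightarrow> ('f,'r) fm \<Rightarrow> 'a list \<Rightarrow> 'a" where
  "skf x p as = (if \<exists>b\<in>dom M. sat M1 ((lenv d0 as)(x:=b)) p
     then SOME b. b \<in> dom M \<and> sat M1 ((lenv d0 as)(x:=b)) p else d0)"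

lemma skf_dom: "skf x p as \<in> dom M"
  unfolding skf_def using d0 by (auto intro: someI2_ex)

lemma skf_spec: "\<exists>b\<in>dom M. sat M1 ((lenv d0 as)(x:=b)) p \<Longrightarrow> sat M1 ((lenv d0 as)(x:=skf x p as)) p"
  unfolding skf_def by (auto intro: someI2_ex)

definition Msk :: "('a, ('f,'r) sf, 'r + nat) struct" where
  "Msk = \<lparr>dom = dom M,
     fnI = \<lambda>s as. (case s of Inl f \<Rightarrow> fnI M1 f as | Inr (x, p) \<Rightarrow> skf x p as),
     relI = \<lambda>s as. (case s of Inl r \<Rightarrow> relI M r as | Inr l \<Rightarrow> (\<exists>y. as = [y] \<and> y \<in> A l))\<rparr>"

lemma Msk_simps[simp]: "dom Msk = dom M" "fnI Msk (Inl f) = fnI M1 f"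
  "fnI Msk (Inr (x,p)) = skf x p" "relI Msk (Inl r) = relI M r"
  "relI Msk (Inr l) as = (\<exists>y. as = [y] \<and> y \<in> A l)"
  by (simp_all add: Msk_def fun_eq_iff)

lemma Msk_closed: "closed Msk"
proof -
  have "fnI Msk s as \<in> dom M" if "set as \<subseteq> dom M" for s as
  proof (cases s)
    case (Inl f)
    then show ?thesis using M1_closed that unfolding closed_def by simp
  next
    case (Inr b)
    then show ?thesis by (cases b) (simp add: skf_dom)
  qed
  then show ?thesis using domM_ne unfolding closed_def by simp
qed

lemma eval_lift: "eval Msk e (map_trm Inl t) = eval M1 e t"
proof (induction t)
  case (Fn f ts)
  then have "map (eval Msk e) (map (map_trm Inl) ts) = map (eval M1 e) ts" by simp
  then show ?case by (simp only: eval.simps trm.map Msk_simps)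
qed simp

lemma sat_lift: "sat Msk e (lift p) = sat M1 e p"
proof (induction p arbitrary: e)
  case (Rel r ts)
  have "map (eval Msk e) (map (map_trm Inl) ts) = map (eval M1 e) ts" using eval_lift by simp
  then show ?case by (simp only: sat.simps lift_simps Msk_simps M1_simps)
qed (simp_all add: eval_lift)

end


context cons
begin

definition F0 :: "(('f,'r) sf, 'r + nat) fm set filter" where
  "F0 = (INF X\<in>{X. finite X}. principal {Y. finite Y \<and> X \<subseteq> Y})"

lemma F0_base:
  "eventually P F0 \<longleftrightarrow> (\<exists>X\<in>{X. finite X}. eventually P (principal {Y. finite Y \<and> X \<subseteq> Y}))"
  unfolding F0_def
proof (rule eventually_INF_base)
  fix a b :: "(('f,'r) sf, 'r + nat) fm set" assume "a \<in> {X. finite X}" "b \<in> {X. finite X}"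
  then show "\<exists>x\<in>{X. finite X}. principal {Y. finite Y \<and> x \<subseteq> Y} \<le>
      inf (principal {Y. finite Y \<and> a \<subseteq> Y}) (principal {Y. finite Y \<and> b \<subseteq> Y})"
    by (intro bexI[of _ "a \<union> b"]) (auto simp: inf_principal)
qed auto

lemma F0_nbot: "F0 \<noteq> bot"
  unfolding trivial_limit_def F0_base eventually_principal by auto

lemma F0_ev: "finite X \<Longrightarrow> eventually (\<lambda>Y. finite Y \<and> X \<subseteq> Y) F0"
  unfolding F0_base eventually_principal by auto

definition U where "U = (SOME U. U \<le> F0 \<and> ultra U)"

lemma U: "U \<le> F0" "ultra U"
  using someI_ex[OF ex_ultra[OF F0_nbot]] unfolding U_def by auto

lemma U_ev: "finite X \<Longrightarrow> eventually (\<lambda>Y. finite Y \<and> X \<subseteq> Y) U"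
  using F0_ev U(1) filter_leD by blast

lemma U_nbot: "U \<noteq> bot" using U(2) ultra_def by blast

definition base :: "nat \<Rightarrow> nat \<Rightarrow> 'a" where
  "base l = (SOME f. inj f \<and> range f \<subseteq> A (Suc (l mod n)))"

lemma piece_lt: "Suc (l mod n) < Suc n" using n1 by simp

lemma base: "inj (base l)" "base l j \<in> A (Suc (l mod n))"
proof -
  have "\<exists>f::nat \<Rightarrow> 'a. inj f \<and> range f \<subseteq> A (Suc (l mod n))"
    using infA piece_lt infinite_countable_subset by blast
  then have "inj (base l) \<and> range (base l) \<subseteq> A (Suc (l mod n))"
    unfolding base_def by (rule someI_ex)
  then show "inj (base l)" "base l j \<in> A (Suc (l mod n))" by auto
qed

lemma base_dom: "base l j \<in> dom M" using base(2) A_sub piece_lt by blast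

definition sq :: "(('f,'r) sf, 'r + nat) fm set \<Rightarrow> nat \<Rightarrow> nat" where
  "sq P = (SOME s. strict_mono s \<and> (finite P \<longrightarrow> (\<forall>p\<in>P. indisc Msk (\<lambda>l j. base l (s j)) p)))"

lemma sq: "strict_mono (sq P) \<and> (finite P \<longrightarrow> (\<forall>p\<in>P. indisc Msk (\<lambda>l j. base l (sq P j)) p))"
proof -
  have "\<exists>s. strict_mono s \<and> (finite P \<longrightarrow> (\<forall>p\<in>P. indisc Msk (\<lambda>l j. base l (s j)) p))"
  proof (cases "finite P")
    case True
    then show ?thesis using indisc_exists[OF True, of Msk base] by blast
  next
    case False
    then show ?thesis by (intro exI[of _ id]) (simp add: strict_mono_def)
  qed
  then show ?thesis unfolding sq_def by (rule someI_ex)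
qed

definition raw :: "nat \<Rightarrow> int \<Rightarrow> (('f,'r) sf, 'r + nat) fm set \<Rightarrow> 'a" where
  "raw l q P = base l (sq P (nat (q + int (card P))))"

abbreviation N where "N \<equiv> up Msk U"

definition dd where "dd l q = rep Msk U (raw l q)"
definition rho where "rho v = dd (lv v) (qv v)"
definition sig where "sig v = vc (lv v) (qv v + 1)"
definition tau where "tau v = vc (lv v) (qv v - 1)"

lemma raw_PI: "raw l q \<in> PI Msk"
  unfolding PI_def raw_def using base_dom by simp

lemma dd_dom: "dd l q \<in> dom N"
  unfolding dd_def using rep_in_up[OF raw_PI] .

lemma dd_ev: "eventually (\<lambda>P. dd l q P = raw l q P) U"
  unfolding dd_def using rep_props[OF raw_PI] by blast

lemma rho_dom: "range rho \<subseteq> dom N" unfolding rho_def using dd_dom by auto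

lemma rs_dom: "range (rho \<circ> sig) \<subseteq> dom N" using rho_dom by auto

lemma N_closed: "closed N" using up_closed[OF Msk_closed] .

lemma rho_sig: "(rho \<circ> sig) v = dd (lv v) (qv v + 1)"
  by (simp add: rho_def sig_def)

lemma indisc_N: "sat N rho p \<longleftrightarrow> sat N (rho \<circ> sig) p"
proof -
  let ?Q = "Qs p"
  have fQ: "finite ?Q" unfolding Qs_def using finite_fv by blast
  obtain B :: nat where B: "\<forall>q\<in>?Q. - q \<le> int B"
  proof
    show "\<forall>q\<in>?Q. - q \<le> int (nat (Max (insert 0 (uminus ` ?Q))))"
      using fQ by (auto intro!: le_nat_iff[THEN iffD2] Max_ge)
  qed
  define X where "X = insert p ((\<lambda>i. Eq (Var i) (Var i)) ` {..<B})"
  have fX: "finite X" unfolding X_def by simp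
  have cX: "B \<le> card X"
  proof -
    let ?I = "(\<lambda>i. Eq (Var i) (Var i)) ` {..<B} :: (('f,'r) sf, 'r + nat) fm set"
    have "card ?I = B"
      by (subst card_image) (auto simp: inj_on_def)
    moreover have "card ?I \<le> card X" using fX by (intro card_mono) (auto simp: X_def)
    ultimately show ?thesis by simp
  qed
  have ev1: "eventually (\<lambda>P. finite P \<and> X \<subseteq> P) U" using U_ev[OF fX] .
  have ev2: "eventually (\<lambda>P. \<forall>v\<in>fv p. rho v P = raw (lv v) (qv v) P) U"
    using finite_fv dd_ev by (intro eventually_ball_finite) (auto simp: rho_def)
  have ev3: "eventually (\<lambda>P. \<forall>v\<in>fv p. (rho \<circ> sig) v P = raw (lv v) (qv v + 1) P) U"
    using finite_fv dd_ev by (intro eventually_ball_finite) (auto simp: rho_sig simp del: comp_apply)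
  have "eventually (\<lambda>P. sat Msk (\<lambda>v. rho v P) p \<longleftrightarrow> sat Msk (\<lambda>v. (rho \<circ> sig) v P) p) U"
    using eventually_conj[OF ev1 eventually_conj[OF ev2 ev3]]
  proof (rule eventually_mono)
    fix P assume hh: "(finite P \<and> X \<subseteq> P) \<and> (\<forall>v\<in>fv p. rho v P = raw (lv v) (qv v) P)
      \<and> (\<forall>v\<in>fv p. (rho \<circ> sig) v P = raw (lv v) (qv v + 1) P)"
    then have h1: "finite P \<and> X \<subseteq> P" and h2: "\<forall>v\<in>fv p. rho v P = raw (lv v) (qv v) P"
      and h3: "\<forall>v\<in>fv p. (rho \<circ> sig) v P = raw (lv v) (qv v + 1) P" by blast+
    have pP: "p \<in> P" using h1 X_def by auto
    have cP: "B \<le> card P" using cX card_mono h1 by (meson order.trans)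
    define J where "J q = nat (q + int (card P))" for q
    define J' where "J' q = nat (q + 1 + int (card P))" for q
    have nn: "0 \<le> q + int (card P)" if "q \<in> ?Q" for q using B that cP by force
    have smJ: "strict_mono_on ?Q J"
    proof (rule strict_mono_onI)
      fix r s assume "r \<in> ?Q" "s \<in> ?Q" "r < s"
      then have "0 \<le> r + int (card P)" using nn by blast
      then show "J r < J s" unfolding J_def using \<open>r < s\<close> by (simp add: nat_less_eq_zless)
    qed
    have smJ': "strict_mono_on ?Q J'"
    proof (rule strict_mono_onI)
      fix r s assume "r \<in> ?Q" "s \<in> ?Q" "r < s"
      then have "0 \<le> r + 1 + int (card P)" using nn by fastforce
      then show "J' r < J' s" unfolding J'_def using \<open>r < s\<close> by (simp add: nat_less_eq_zless)
    qed
    have ind: "indisc Msk (\<lambda>l j. base l (sq P j)) p" using sq h1 pP by blast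
    have e1: "sat Msk (\<lambda>v. rho v P) p = sat Msk (ienv (\<lambda>l j. base l (sq P j)) J) p"
      by (rule sat_cong) (simp add: h2 ienv_def raw_def J_def)
    have e2: "sat Msk (\<lambda>v. (rho \<circ> sig) v P) p = sat Msk (ienv (\<lambda>l j. base l (sq P j)) J') p"
      by (rule sat_cong) (simp add: h3 ienv_def raw_def J'_def del: comp_apply)
    show "sat Msk (\<lambda>v. rho v P) p \<longleftrightarrow> sat Msk (\<lambda>v. (rho \<circ> sig) v P) p"
      using ind smJ smJ' unfolding e1 e2 indisc_def by blast
  qed
  then show ?thesis
    using los[OF Msk_closed U(2) rho_dom] los[OF Msk_closed U(2) rs_dom] ultra_iff[OF U(2)]
    by blast
qed

end


context cons
begin

definition hull where "hull = range (eval N rho)"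

lemma hull_dom: "hull \<subseteq> dom N"
  unfolding hull_def using eval_in_dom[OF N_closed rho_dom] by auto

lemma rho_hull: "rho v \<in> hull"
  unfolding hull_def by (rule range_eqI[of _ _ "Var v"]) simp

lemma hull_rep: "x \<in> hull \<Longrightarrow> x = eval N rho (SOME t. x = eval N rho t)"
  unfolding hull_def by (auto intro: someI)

lemma hull_closed: "range e \<subseteq> hull \<Longrightarrow> eval N e t \<in> hull"
proof -
  assume h: "range e \<subseteq> hull"
  define s where "s v = (SOME t. e v = eval N rho t)" for v
  have "e v = eval N rho (s v)" for v using hull_rep[of "e v"] h unfolding s_def by auto
  then have "e = (\<lambda>v. eval N rho (s v))" by auto
  then have "eval N e t = eval N rho (tsubst s t)" by (simp add: eval_tsubst)
  then show ?thesis unfolding hull_def by simp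
qed

lemma hull_fn: "set as \<subseteq> hull \<Longrightarrow> fnI N f as \<in> hull"
proof -
  assume h: "set as \<subseteq> hull"
  let ?e = "lenv (rho 0) as"
  have r: "range ?e \<subseteq> hull" using h rho_hull by (auto simp: lenv_def)
  have "map ?e [0..<length as] = as" by (rule nth_equalityI) (simp_all add: lenv_def)
  then have "eval N ?e (Fn f (map Var [0..<length as])) = fnI N f as"
    by (simp add: comp_def)
  then show ?thesis using hull_closed[OF r] by metis
qed

lemma eq_shift: "eval N rho t = eval N rho t' \<longleftrightarrow> eval N (rho \<circ> sig) t = eval N (rho \<circ> sig) t'"
  using indisc_N[of "Eq t t'"] by simp

definition g where "g x = eval N (rho \<circ> sig) (SOME t. x = eval N rho t)"

lemma g_eval: "g (eval N rho t) = eval N (rho \<circ> sig) t"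
proof -
  let ?t = "SOME t'. eval N rho t = eval N rho t'"
  have "eval N rho t = eval N rho ?t" by (rule someI) (rule refl)
  then show ?thesis unfolding g_def using eq_shift by metis
qed

lemma rs_eval: "eval N (rho \<circ> sig) t = eval N rho (tsubst (Var \<circ> sig) t)"
  by (simp add: eval_tsubst comp_def)

lemma rst: "(rho \<circ> sig) \<circ> tau = rho"
  by (auto simp: rho_def sig_def tau_def)

lemma g_hull: "x \<in> hull \<Longrightarrow> g x \<in> hull"
  unfolding hull_def using g_eval rs_eval by auto

lemma g_bij: "bij_betw g hull hull"
proof (rule bij_betw_imageI)
  show "inj_on g hull"
  proof (rule inj_onI)
    fix x y assume "x \<in> hull" "y \<in> hull" "g x = g y"
    then obtain t t' where "x = eval N rho t" "y = eval N rho t'" unfolding hull_def by auto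
    then show "x = y" using \<open>g x = g y\<close> g_eval eq_shift by metis
  qed
  show "g ` hull = hull"
  proof
    show "g ` hull \<subseteq> hull" using g_hull by auto
    show "hull \<subseteq> g ` hull"
    proof
      fix y assume "y \<in> hull"
      then obtain t where t: "y = eval N rho t" unfolding hull_def by auto
      have "eval N rho t = eval N ((rho \<circ> sig) \<circ> tau) t" using rst by simp
      also have "\<dots> = eval N (rho \<circ> sig) (tsubst (Var \<circ> tau) t)" by (simp add: eval_tsubst comp_def)
      also have "\<dots> = g (eval N rho (tsubst (Var \<circ> tau) t))" by (simp add: g_eval)
      finally show "y \<in> g ` hull" using t unfolding hull_def by auto
    qed
  qed
qed

lemma hull_terms: "set as \<subseteq> hull \<Longrightarrow> \<exists>ts. as = map (eval N rho) ts"
proof -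
  assume "set as \<subseteq> hull"
  then have "as = map (eval N rho) (map (\<lambda>x. SOME t. x = eval N rho t) as)"
  proof (intro nth_equalityI)
    fix i assume "set as \<subseteq> hull" "i < length as"
    then have "as ! i \<in> hull" by auto
    then show "as ! i = map (eval N rho) (map (\<lambda>x. SOME t. x = eval N rho t) as) ! i"
      using hull_rep \<open>i < length as\<close> by simp
  qed simp
  then show ?thesis by blast
qed

lemma g_fn: "set as \<subseteq> hull \<Longrightarrow> g (fnI N f as) = fnI N f (map g as)"
proof -
  assume "set as \<subseteq> hull"
  then obtain ts where ts: "as = map (eval N rho) ts" using hull_terms by blast
  have "g (fnI N f as) = g (eval N rho (Fn f ts))" using ts by simp
  also have "\<dots> = eval N (rho \<circ> sig) (Fn f ts)" by (rule g_eval)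
  also have "\<dots> = fnI N f (map g as)" using ts by (simp add: g_eval comp_def)
  finally show ?thesis .
qed

lemma g_rel: "set as \<subseteq> hull \<Longrightarrow> relI N r (map g as) = relI N r as"
proof -
  assume "set as \<subseteq> hull"
  then obtain ts where ts: "as = map (eval N rho) ts" using hull_terms by blast
  have "relI N r as = sat N rho (Rel r ts)" using ts by simp
  also have "\<dots> = sat N (rho \<circ> sig) (Rel r ts)" by (rule indisc_N)
  also have "\<dots> = relI N r (map g as)" using ts by (simp add: g_eval comp_def)
  finally show ?thesis by simp
qed

definition Pc where "Pc l = {x \<in> hull. eventually (\<lambda>P. x P \<in> A l) U}"

lemma relI_Inr: "relI N (Inr l) [x] \<longleftrightarrow> eventually (\<lambda>P. x P \<in> A l) U"
  by (simp add: up_def)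

lemma g_Pc: "x \<in> hull \<Longrightarrow> g x \<in> Pc l \<longleftrightarrow> x \<in> Pc l"
proof -
  assume x: "x \<in> hull"
  have "relI N (Inr l) [g x] = relI N (Inr l) [x]" using g_rel[of "[x]" "Inr l"] x by simp
  then have "eventually (\<lambda>P. g x P \<in> A l) U = eventually (\<lambda>P. x P \<in> A l) U"
    by (simp only: relI_Inr)
  then show ?thesis using g_hull[OF x] x unfolding Pc_def by auto
qed

lemma hull_PI: "x \<in> hull \<Longrightarrow> x P \<in> dom M"
  using hull_dom up_dom_PI[of Msk U] unfolding PI_def by auto

lemma piece_ex: "x \<in> hull \<Longrightarrow> \<exists>l<Suc n. x \<in> Pc l"
proof -
  assume x: "x \<in> hull"
  have "eventually (\<lambda>P. \<exists>l<Suc n. x P \<in> A l) U"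
    using hull_PI[OF x] dom_A by (intro always_eventually) blast
  then have "\<exists>l<Suc n. eventually (\<lambda>P. x P \<in> A l) U"
    using ultra_ex_finite[OF U(2), of "Suc n" "\<lambda>l P. x P \<in> A l"] by blast
  then show ?thesis using x unfolding Pc_def by blast
qed

lemma piece_uniq: "x \<in> Pc l \<Longrightarrow> x \<in> Pc l' \<Longrightarrow> l < Suc n \<Longrightarrow> l' < Suc n \<Longrightarrow> l = l'"
proof (rule ccontr)
  assume h: "x \<in> Pc l" "x \<in> Pc l'" "l < Suc n" "l' < Suc n" "l \<noteq> l'"
  then have ev: "eventually (\<lambda>P. x P \<in> A l \<and> x P \<in> A l') U"
    unfolding Pc_def by (auto intro: eventually_conj)
  have dj: "A l \<inter> A l' = {}" using A_disj h by blast
  have "eventually (\<lambda>P. False) U" by (rule eventually_mono[OF ev]) (use dj in blast)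
  then show False using U_nbot by simp
qed

lemma dd_rho: "dd l q = rho (vc l q)" by (simp add: rho_def)

lemma dd_hull: "dd l q \<in> hull" using rho_hull dd_rho by simp

lemma dd_Pc: "dd l q \<in> Pc (Suc (l mod n))"
proof -
  have "eventually (\<lambda>P. dd l q P \<in> A (Suc (l mod n))) U"
    using dd_ev[of l q] by (rule eventually_mono) (simp add: raw_def base(2))
  then show ?thesis unfolding Pc_def using dd_hull by simp
qed

lemma g_dd: "g (dd l q) = dd l (q + 1)"
proof -
  have "g (dd l q) = g (eval N rho (Var (vc l q)))" by (simp add: dd_rho)
  also have "\<dots> = eval N (rho \<circ> sig) (Var (vc l q))" by (rule g_eval)
  also have "\<dots> = (rho \<circ> sig) (vc l q)" by (simp only: eval.simps)
  also have "\<dots> = dd l (q + 1)" by (simp only: rho_sig lv_vc qv_vc)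
  finally show ?thesis .
qed

lemma dd_neq: "dd l 0 \<noteq> dd l 1"
proof
  assume "dd l 0 = dd l 1"
  then have "eventually (\<lambda>P. dd l 0 P = dd l 1 P) U" by simp
  then have "eventually (\<lambda>P. dd l 0 P = dd l 1 P \<and> (dd l 0 P = raw l 0 P \<and> dd l 1 P = raw l 1 P)) U"
    using dd_ev[of l 0] dd_ev[of l 1] by (intro eventually_conj)
  then have ev: "eventually (\<lambda>P. raw l 0 P = raw l 1 P) U"
    by (rule eventually_mono) auto
  have ne: "raw l 0 P \<noteq> raw l 1 P" for P
  proof -
    have "sq P (nat (int (card P))) \<noteq> sq P (nat (1 + int (card P)))"
      using sq[of P] strict_mono_eq by fastforce
    then show ?thesis unfolding raw_def using base(1)[of l] by (auto dest: injD)
  qed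
  have "eventually (\<lambda>P. False) U" by (rule eventually_mono[OF ev]) (use ne in blast)
  then show False using U_nbot by simp
qed

definition HL :: "(_ \<Rightarrow> 'a, 'f, 'r) struct" where
  "HL = \<lparr>dom = hull, fnI = \<lambda>f. fnI N (Inl f), relI = \<lambda>r. relI N (Inl r)\<rparr>"

lemma HL_simps[simp]: "dom HL = hull" "fnI HL f = fnI N (Inl f)" "relI HL r = relI N (Inl r)"
  by (simp_all add: HL_def)

lemma HL_closed: "closed HL"
  using rho_hull hull_fn unfolding closed_def by auto

lemma eval_HL: "eval HL e t = eval N e (map_trm Inl t)"
proof (induction t)
  case (Fn f ts)
  then have "map (eval HL e) ts = map (eval N e) (map (map_trm Inl) ts)" by simp
  then show ?case by (simp only: eval.simps trm.map HL_simps)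
qed simp

lemma sat_HL: "range e \<subseteq> hull \<Longrightarrow> sat HL e p \<longleftrightarrow> sat N e (lift p)"
proof (induction p arbitrary: e)
  case (Eq s t)
  then show ?case by (simp add: eval_HL)
next
  case (Rel r ts)
  have "map (eval HL e) ts = map (eval N e) (map (map_trm Inl) ts)" by (simp add: eval_HL)
  then show ?case by (simp only: sat.simps lift_simps HL_simps)
next
  case (Neg p)
  then show ?case by simp
next
  case (Conj p q)
  then show ?case by simp
next
  case (Ex x p)
  have eN: "range e \<subseteq> dom N" using Ex.prems hull_dom by auto
  show ?case
  proof
    assume "sat HL e (fm.Ex x p)"
    then obtain a where a: "a \<in> hull" "sat HL (e(x:=a)) p" by auto
    have "range (e(x:=a)) \<subseteq> hull" using a Ex.prems by auto
    then have "sat N (e(x:=a)) (lift p)" using Ex.IH a by blast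
    then show "sat N e (lift (fm.Ex x p))" using a hull_dom by auto
  next
    assume "sat N e (lift (fm.Ex x p))"
    then have ev: "eventually (\<lambda>P. \<exists>b\<in>dom M. sat M1 ((\<lambda>v. e v P)(x:=b)) p) U"
      using los[OF Msk_closed U(2) eN, of "lift (fm.Ex x p)"] by (simp add: sat_lift)
    define K where "K = Suc (Max (insert x (fv p)))"
    have vK: "v < K" if "v \<in> insert x (fv p)" for v
    proof -
      have "v \<le> Max (insert x (fv p))" by (rule Max_ge) (use finite_fv that in auto)
      then show ?thesis unfolding K_def by simp
    qed
    define w where "w = eval N e (Fn (Inr (x, p)) (map Var [0..<K]))"
    have wh: "w \<in> hull" unfolding w_def using hull_closed Ex.prems by blast
    have evw: "eventually (\<lambda>P. w P = skf x p (map (\<lambda>v. e v P) [0..<K])) U"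
      using los_eval[OF Msk_closed eN, of "Fn (Inr (x, p)) (map Var [0..<K])"]
      unfolding w_def by (simp add: comp_def)
    have "eventually (\<lambda>P. sat M1 ((\<lambda>v. e v P)(x:=w P)) p) U"
      using ev evw
    proof (rule eventually_elim2)
      fix P assume h1: "\<exists>b\<in>dom M. sat M1 ((\<lambda>v. e v P)(x:=b)) p"
        and h2: "w P = skf x p (map (\<lambda>v. e v P) [0..<K])"
      let ?as = "map (\<lambda>v. e v P) [0..<K]"
      have ag: "((lenv d0 ?as)(x:=b)) v = ((\<lambda>v. e v P)(x:=b)) v" if "v \<in> fv p" for v b
        using vK[of v] that by (auto simp: lenv_def)
      have sc: "sat M1 ((lenv d0 ?as)(x:=b)) p = sat M1 ((\<lambda>v. e v P)(x:=b)) p" for b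
        by (rule sat_cong) (use ag in blast)
      have "\<exists>b\<in>dom M. sat M1 ((lenv d0 ?as)(x:=b)) p"
        using h1 unfolding sc .
      then have "sat M1 ((lenv d0 ?as)(x:=skf x p ?as)) p" by (rule skf_spec)
      then show "sat M1 ((\<lambda>v. e v P)(x:=w P)) p"
        unfolding sc h2 .
    qed
    then have "eventually (\<lambda>P. sat Msk (\<lambda>v. (e(x:=w)) v P) (lift p)) U"
    proof (rule eventually_mono)
      fix P assume "sat M1 ((\<lambda>v. e v P)(x:=w P)) p"
      moreover have "(\<lambda>v. (e(x:=w)) v P) = (\<lambda>v. e v P)(x:=w P)" by auto
      ultimately show "sat Msk (\<lambda>v. (e(x:=w)) v P) (lift p)" by (simp add: sat_lift)
    qed
    moreover have rw: "range (e(x:=w)) \<subseteq> hull" using wh Ex.prems by auto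
    ultimately have "sat N (e(x:=w)) (lift p)"
      using los[OF Msk_closed U(2)] hull_dom by (meson order.trans)
    then have "sat HL (e(x:=w)) p" using Ex.IH[OF rw] by blast
    then show "sat HL e (fm.Ex x p)" using wh by auto
  qed
qed

lemma los_HL: "range e \<subseteq> hull \<Longrightarrow> sat HL e p \<longleftrightarrow> eventually (\<lambda>P. sat M1 (\<lambda>v. e v P) p) U"
  using sat_HL los[OF Msk_closed U(2), of e "lift p"] hull_dom by (simp add: sat_lift)

lemma g_HL: "range e \<subseteq> hull \<Longrightarrow> sat HL (g \<circ> e) p = sat HL e p"
  by (rule sat_hom[OF HL_closed]) (simp_all add: g_bij g_fn g_rel)

end


definition sdprop :: "('f \<Rightarrow> nat) \<Rightarrow> ('r \<Rightarrow> nat) \<Rightarrow> nat \<Rightarrow> ('x,'f,'r) struct \<Rightarrow> (nat \<Rightarrow> 'x set) \<Rightarrow> bool" where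
  "sdprop arf arr m S P \<longleftrightarrow> (\<forall>\<Delta>1. finite \<Delta>1 \<and> (\<forall>p \<in> \<Delta>1. wf_fm arf arr p) \<longrightarrow>
          (\<exists>\<Delta>2. finite \<Delta>2 \<and> (\<forall>p \<in> \<Delta>2. wf_fm arf arr p) \<and>
             (\<forall>a b :: nat \<Rightarrow> 'x list.
                (\<forall>l<m. set (a l) \<subseteq> P l \<and> set (b l) \<subseteq> P l \<and> same_type S \<Delta>2 (a l) (b l))
                \<and> a 0 = b 0
                \<longrightarrow> same_type S \<Delta>1 (concat (map a [0..<m])) (concat (map b [0..<m])))))"

lemma lenv_map: "(\<lambda>v. lenv z xs v P) = lenv (z P) (map (\<lambda>x. x P) xs)"
  by (auto simp: lenv_def)

lemma length_concat_eq:
  "(\<And>l. l < m \<Longrightarrow> length (a l) = length (b l)) \<Longrightarrow>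
   length (concat (map a [0..<m])) = length (concat (map b [0..<m]))"
  by (induction m) auto

context cons
begin

lemma lenv_hull: "set xs \<subseteq> hull \<Longrightarrow> range (lenv (rho 0) xs) \<subseteq> hull"
  using rho_hull by (auto simp: lenv_def)

lemma lenv_domM: "set xs \<subseteq> hull \<Longrightarrow> range (lenv (rho 0 P) (map (\<lambda>x. x P) xs)) \<subseteq> dom M"
proof
  fix y assume h: "set xs \<subseteq> hull" and "y \<in> range (lenv (rho 0 P) (map (\<lambda>x. x P) xs))"
  then obtain i where y: "y = lenv (rho 0 P) (map (\<lambda>x. x P) xs) i" by auto
  show "y \<in> dom M"
  proof (cases "i < length xs")
    case True
    then have "xs ! i \<in> hull" using h nth_mem by blast
    then show ?thesis using y True hull_PI by (simp add: lenv_def)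
  next
    case False
    then show ?thesis using y rho_hull hull_PI by (simp add: lenv_def)
  qed
qed

lemma Pc_hull: "Pc l \<subseteq> hull" unfolding Pc_def by auto

lemma prop_HL:
  assumes pM: "sdprop arf arr (Suc n) M A"
  shows "sdprop arf arr (Suc n) HL Pc"
  unfolding sdprop_def
proof (intro allI impI)
  fix \<Delta>1 :: "('f,'r) fm set" assume D1: "finite \<Delta>1 \<and> (\<forall>p\<in>\<Delta>1. wf_fm arf arr p)"
  obtain \<Delta>2 where D2: "finite \<Delta>2" "\<forall>p\<in>\<Delta>2. wf_fm arf arr p"
    and PM0: "\<forall>a b :: nat \<Rightarrow> 'a list.
                (\<forall>l<Suc n. set (a l) \<subseteq> A l \<and> set (b l) \<subseteq> A l \<and> same_type M \<Delta>2 (a l) (b l))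
                \<and> a 0 = b 0
                \<longrightarrow> same_type M \<Delta>1 (concat (map a [0..<Suc n])) (concat (map b [0..<Suc n]))"
    using pM[unfolded sdprop_def, rule_format, OF D1] by blast
  note PM = PM0[rule_format]
  let ?z = "rho 0"
  show "\<exists>\<Delta>2. finite \<Delta>2 \<and> (\<forall>p\<in>\<Delta>2. wf_fm arf arr p) \<and>
             (\<forall>a b. (\<forall>l<Suc n. set (a l) \<subseteq> Pc l \<and> set (b l) \<subseteq> Pc l \<and> same_type HL \<Delta>2 (a l) (b l))
                \<and> a 0 = b 0
                \<longrightarrow> same_type HL \<Delta>1 (concat (map a [0..<Suc n])) (concat (map b [0..<Suc n])))"
  proof (intro exI[of _ \<Delta>2] conjI D2 allI impI)
    fix a b assume H: "(\<forall>l<Suc n. set (a l) \<subseteq> Pc l \<and> set (b l) \<subseteq> Pc l \<and> same_type HL \<Delta>2 (a l) (b l))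
                \<and> a 0 = b 0"
    let ?ca = "concat (map a [0..<Suc n])" and ?cb = "concat (map b [0..<Suc n])"
    have len: "length (a l) = length (b l)" if "l < Suc n" for l
      using H that unfolding same_type_def by blast
    have lenc: "length ?ca = length ?cb" by (rule length_concat_eq) (use len in auto)
    have ah: "x \<in> hull" if "l < Suc n" "x \<in> set (a l)" for l x
      using H that Pc_hull by blast
    have bh: "x \<in> hull" if "l < Suc n" "x \<in> set (b l)" for l x
      using H that Pc_hull by blast
    have sca: "set ?ca \<subseteq> hull" "set ?cb \<subseteq> hull" using ah bh by (auto simp del: upt_Suc)
    define aP where "aP P l = map (\<lambda>x. x P) (a l)" for P l
    define bP where "bP P l = map (\<lambda>x. x P) (b l)" for P l
    have cP: "map (\<lambda>x. x P) ?ca = concat (map (aP P) [0..<Suc n])"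
             "map (\<lambda>x. x P) ?cb = concat (map (bP P) [0..<Suc n])" for P
      by (simp_all add: aP_def[abs_def] bP_def[abs_def] map_concat comp_def)
    have evA: "eventually (\<lambda>P. \<forall>l\<in>{..<Suc n}. \<forall>x\<in>set (a l). x P \<in> A l) U"
      using H unfolding Pc_def by (intro eventually_ball_finite finite_lessThan finite_set ballI) auto
    have evB: "eventually (\<lambda>P. \<forall>l\<in>{..<Suc n}. \<forall>x\<in>set (b l). x P \<in> A l) U"
      using H unfolding Pc_def by (intro eventually_ball_finite finite_lessThan finite_set ballI) auto
    have evT: "eventually (\<lambda>P. \<forall>l\<in>{..<Suc n}. \<forall>q\<in>\<Delta>2. fv q \<subseteq> {..<length (a l)} \<longrightarrow>
        (sat M1 (lenv (?z P) (aP P l)) q \<longleftrightarrow> sat M1 (lenv (?z P) (bP P l)) q)) U"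
    proof (intro eventually_ball_finite ballI finite_lessThan D2(1))
      fix l q assume l: "l \<in> {..<Suc n}" and q: "q \<in> \<Delta>2"
      have st: "same_type HL \<Delta>2 (a l) (b l)" "set (a l) \<subseteq> hull" "set (b l) \<subseteq> hull"
        using H l ah bh by auto
      show "eventually (\<lambda>P. fv q \<subseteq> {..<length (a l)} \<longrightarrow>
        (sat M1 (lenv (?z P) (aP P l)) q \<longleftrightarrow> sat M1 (lenv (?z P) (bP P l)) q)) U"
      proof (cases "fv q \<subseteq> {..<length (a l)}")
        case True
        then have "sat HL (lenv ?z (a l)) q \<longleftrightarrow> sat HL (lenv ?z (b l)) q"
          using st(1) q unfolding same_type_lenv[of _ _ _ _ ?z] by blast
        then have "eventually (\<lambda>P. sat M1 (lenv (?z P) (aP P l)) q) U \<longleftrightarrow>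
                   eventually (\<lambda>P. sat M1 (lenv (?z P) (bP P l)) q) U"
          using los_HL[OF lenv_hull[OF st(2)]] los_HL[OF lenv_hull[OF st(3)]]
          by (simp add: lenv_map aP_def bP_def)
        then show ?thesis using ultra_iff[OF U(2)] by (simp add: True)
      qed simp
    qed
    show "same_type HL \<Delta>1 ?ca ?cb"
      unfolding same_type_lenv[of _ _ _ _ ?z]
    proof (intro conjI lenc ballI impI)
      fix p assume p: "p \<in> \<Delta>1" and fvp: "fv p \<subseteq> {..<length ?ca}"
      have wp: "wf_fm arf arr p" using D1 p by blast
      have "eventually (\<lambda>P. sat M1 (lenv (?z P) (map (\<lambda>x. x P) ?ca)) p \<longleftrightarrow>
                             sat M1 (lenv (?z P) (map (\<lambda>x. x P) ?cb)) p) U"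
        using eventually_conj[OF evA eventually_conj[OF evB evT]]
      proof (rule eventually_mono)
        fix P assume G: "(\<forall>l\<in>{..<Suc n}. \<forall>x\<in>set (a l). x P \<in> A l) \<and>
          (\<forall>l\<in>{..<Suc n}. \<forall>x\<in>set (b l). x P \<in> A l) \<and>
          (\<forall>l\<in>{..<Suc n}. \<forall>q\<in>\<Delta>2. fv q \<subseteq> {..<length (a l)} \<longrightarrow>
             (sat M1 (lenv (?z P) (aP P l)) q \<longleftrightarrow> sat M1 (lenv (?z P) (bP P l)) q))"
        have zP: "?z P \<in> dom M" using hull_PI rho_hull by blast
        have dl: "range (lenv (?z P) (aP P l)) \<subseteq> dom M" "range (lenv (?z P) (bP P l)) \<subseteq> dom M"
          if "l < Suc n" for l
        proof -
          have "set (a l) \<subseteq> hull" "set (b l) \<subseteq> hull" using ah bh that by auto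
          then show "range (lenv (?z P) (aP P l)) \<subseteq> dom M" "range (lenv (?z P) (bP P l)) \<subseteq> dom M"
            unfolding aP_def bP_def using lenv_domM by blast+
        qed
        have "same_type M \<Delta>1 (concat (map (aP P) [0..<Suc n])) (concat (map (bP P) [0..<Suc n]))"
        proof (rule PM, intro conjI allI impI)
          fix l assume l: "l < Suc n"
          show "set (aP P l) \<subseteq> A l" "set (bP P l) \<subseteq> A l" using G l by (auto simp: aP_def bP_def)
          show "same_type M \<Delta>2 (aP P l) (bP P l)"
            unfolding same_type_lenv[of _ _ _ _ "?z P"]
          proof (intro conjI ballI impI)
            show "length (aP P l) = length (bP P l)" using len l by (simp add: aP_def bP_def)
            fix q assume q: "q \<in> \<Delta>2" and fq: "fv q \<subseteq> {..<length (aP P l)}"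
            then have "sat M1 (lenv (?z P) (aP P l)) q \<longleftrightarrow> sat M1 (lenv (?z P) (bP P l)) q"
              using G l by (auto simp: aP_def)
            then show "sat M (lenv (?z P) (aP P l)) q \<longleftrightarrow> sat M (lenv (?z P) (bP P l)) q"
              using sat_M1[OF _ dl(1)[OF l]] sat_M1[OF _ dl(2)[OF l]] D2(2) q by simp
          qed
        next
          show "aP P 0 = bP P 0" using H by (simp add: aP_def bP_def)
        qed
        then have ST: "\<forall>p\<in>\<Delta>1. fv p \<subseteq> {..<length (concat (map (aP P) [0..<Suc n]))} \<longrightarrow>
            (sat M (lenv (?z P) (concat (map (aP P) [0..<Suc n]))) p \<longleftrightarrow>
             sat M (lenv (?z P) (concat (map (bP P) [0..<Suc n]))) p)"
          unfolding same_type_lenv[of _ _ _ _ "?z P"] by blast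
        have lca: "length (concat (map (aP P) [0..<Suc n])) = length ?ca"
          by (simp only: cP(1)[symmetric] length_map)
        have "fv p \<subseteq> {..<length (concat (map (aP P) [0..<Suc n]))}" using fvp by (simp only: lca)
        then have "sat M (lenv (?z P) (map (\<lambda>x. x P) ?ca)) p \<longleftrightarrow> sat M (lenv (?z P) (map (\<lambda>x. x P) ?cb)) p"
          unfolding cP using ST p by blast
        moreover have "range (lenv (?z P) (map (\<lambda>x. x P) ?ca)) \<subseteq> dom M"
          "range (lenv (?z P) (map (\<lambda>x. x P) ?cb)) \<subseteq> dom M"
          using lenv_domM sca by blast+
        ultimately show "sat M1 (lenv (?z P) (map (\<lambda>x. x P) ?ca)) p \<longleftrightarrow> sat M1 (lenv (?z P) (map (\<lambda>x. x P) ?cb)) p"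
          using sat_M1[OF wp] by simp
      qed
      then show "sat HL (lenv ?z ?ca) p \<longleftrightarrow> sat HL (lenv ?z ?cb) p"
        using los_HL[OF lenv_hull[OF sca(1)]] los_HL[OF lenv_hull[OF sca(2)]] ultra_iff[OF U(2)]
        by (simp add: lenv_map)
    qed
  qed
qed

end


lemma same_type_refl: "same_type S D xs xs"
  unfolding same_type_def by simp

locale cons2 = cons arf arr M A n
  for arf :: "'f \<Rightarrow> nat" and arr :: "'r \<Rightarrow> nat" and M :: "('a,'f,'r) struct"
    and A :: "nat \<Rightarrow> 'a set" and n :: nat +
  assumes pM: "sdprop arf arr (Suc n) M A"
begin

definition act :: "nat set \<Rightarrow> nat \<Rightarrow> bool" where
  "act S l \<longleftrightarrow> (\<exists>j<n. j \<in> S \<and> l = Suc j)"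

definition FS :: "nat set \<Rightarrow> _ \<Rightarrow> _" where
  "FS S x = (if \<exists>j<n. j \<in> S \<and> x \<in> Pc (Suc j) then g x else x)"

lemma FS_piece: "x \<in> Pc l \<Longrightarrow> l < Suc n \<Longrightarrow> FS S x = (if act S l then g x else x)"
proof -
  assume x: "x \<in> Pc l" "l < Suc n"
  have "(\<exists>j<n. j \<in> S \<and> x \<in> Pc (Suc j)) \<longleftrightarrow> act S l"
  proof
    assume "\<exists>j<n. j \<in> S \<and> x \<in> Pc (Suc j)"
    then obtain j where j: "j < n" "j \<in> S" "x \<in> Pc (Suc j)" by blast
    then have "l = Suc j" using piece_uniq[OF x(1) j(3) x(2)] by simp
    then show "act S l" using j unfolding act_def by blast
  next
    assume "act S l"
    then show "\<exists>j<n. j \<in> S \<and> x \<in> Pc (Suc j)" using x unfolding act_def by blast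
  qed
  then show ?thesis unfolding FS_def by simp
qed

lemma FS_hull: "x \<in> hull \<Longrightarrow> FS S x \<in> hull"
  unfolding FS_def using g_hull by auto

lemma FS_Pc: "x \<in> hull \<Longrightarrow> FS S x \<in> Pc l \<longleftrightarrow> x \<in> Pc l"
  unfolding FS_def using g_Pc by auto

lemma FS_bij: "bij_betw (FS S) hull hull"
proof (rule bij_betw_imageI)
  show "inj_on (FS S) hull"
  proof (rule inj_onI)
    fix x y assume x: "x \<in> hull" and y: "y \<in> hull" and e: "FS S x = FS S y"
    obtain l where l: "l < Suc n" "x \<in> Pc l" using piece_ex[OF x] by blast
    have "FS S x \<in> Pc l" using FS_Pc[OF x] l(2) by blast
    then have "FS S y \<in> Pc l" using e by simp
    then have yl: "y \<in> Pc l" using FS_Pc[OF y] by simp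
    show "x = y"
    proof (cases "act S l")
      case True
      then have "g x = g y" using e FS_piece[OF l(2) l(1)] FS_piece[OF yl l(1)] by simp
      then show ?thesis using g_bij x y unfolding bij_betw_def inj_on_def by blast
    next
      case False
      then show ?thesis using e FS_piece[OF l(2) l(1)] FS_piece[OF yl l(1)] by simp
    qed
  qed
  show "FS S ` hull = hull"
  proof
    show "FS S ` hull \<subseteq> hull" using FS_hull by auto
    show "hull \<subseteq> FS S ` hull"
    proof
      fix y assume y: "y \<in> hull"
      obtain l where l: "l < Suc n" "y \<in> Pc l" using piece_ex[OF y] by blast
      show "y \<in> FS S ` hull"
      proof (cases "act S l")
        case True
        obtain x where x: "x \<in> hull" "y = g x" using g_bij y unfolding bij_betw_def by auto
        then have "x \<in> Pc l" using g_Pc l by auto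
        then have "FS S x = y" using FS_piece[of x l S] l True x by simp
        then show ?thesis using x(1) by (metis image_eqI)
      next
        case False
        then have "FS S y = y" using FS_piece[OF l(2) l(1)] by simp
        then show ?thesis using y by force
      qed
    qed
  qed
qed

lemma same_type_g: "set xs \<subseteq> hull \<Longrightarrow> same_type HL D xs (map g xs)"
  unfolding same_type_def
proof (intro conjI ballI impI)
  fix p :: "('f,'r) fm" assume xs: "set xs \<subseteq> hull" and fp: "fv p \<subseteq> {..<length xs}"
  let ?z = "rho 0"
  have "sat HL (\<lambda>i. xs ! i) p = sat HL (lenv ?z xs) p"
    by (rule sat_cong) (use fp in \<open>auto simp: lenv_def\<close>)
  also have "\<dots> = sat HL (g \<circ> lenv ?z xs) p" using g_HL[OF lenv_hull[OF xs]] by simp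
  also have "\<dots> = sat HL (\<lambda>i. map g xs ! i) p"
    by (rule sat_cong) (use fp in \<open>auto simp: lenv_def\<close>)
  finally show "sat HL (\<lambda>i. xs ! i) p = sat HL (\<lambda>i. map g xs ! i) p" .
qed simp

lemma FS_list:
  assumes xs: "set xs \<subseteq> hull"
  shows "\<exists>ca. set ca \<subseteq> hull \<and> set xs \<subseteq> set ca \<and>
     (\<forall>p. wf_fm arf arr p \<and> fv p \<subseteq> {..<length ca} \<longrightarrow>
        (sat HL (lenv (rho 0) ca) p \<longleftrightarrow> sat HL (lenv (rho 0) (map (FS S) ca)) p))"
proof -
  define a where "a l = filter (\<lambda>x. x \<in> Pc l) xs" for l
  define b where "b l = map (FS S) (a l)" for l
  let ?ca = "concat (map a [0..<Suc n])"
  have ca_hull: "set ?ca \<subseteq> hull" using xs by (auto simp: a_def)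
  have xs_ca: "set xs \<subseteq> set ?ca"
  proof
    fix x assume x: "x \<in> set xs"
    then obtain l where l: "l < Suc n" "x \<in> Pc l" using piece_ex xs by blast
    then have "x \<in> set (a l)" using x by (simp add: a_def)
    then show "x \<in> set ?ca" using l(1) by (auto simp del: upt_Suc)
  qed
  have cb: "concat (map b [0..<Suc n]) = map (FS S) ?ca"
    by (simp add: b_def[abs_def] map_concat comp_def)
  have main: "sat HL (lenv (rho 0) ?ca) p \<longleftrightarrow> sat HL (lenv (rho 0) (map (FS S) ?ca)) p"
    if p: "wf_fm arf arr p" "fv p \<subseteq> {..<length ?ca}" for p
  proof -
    obtain \<Delta>2 where PH: "\<forall>a b. (\<forall>l<Suc n. set (a l) \<subseteq> Pc l \<and> set (b l) \<subseteq> Pc l \<and> same_type HL \<Delta>2 (a l) (b l))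
                \<and> a 0 = b 0
                \<longrightarrow> same_type HL {p} (concat (map a [0..<Suc n])) (concat (map b [0..<Suc n]))"
      using prop_HL[OF pM, unfolded sdprop_def, rule_format, of "{p}"] p(1) by auto
    have "same_type HL {p} ?ca (concat (map b [0..<Suc n]))"
    proof (rule PH[rule_format], intro conjI allI impI)
      fix l assume l: "l < Suc n"
      show sa: "set (a l) \<subseteq> Pc l" by (auto simp: a_def)
      show "set (b l) \<subseteq> Pc l" unfolding b_def
      proof
        fix y assume "y \<in> set (map (FS S) (a l))"
        then obtain x where x: "x \<in> set (a l)" "y = FS S x" by auto
        then have "x \<in> Pc l" "x \<in> hull" using sa Pc_hull by auto
        then show "y \<in> Pc l" using FS_Pc x(2) by blast
      qed
      have bl: "b l = (if act S l then map g (a l) else a l)"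
        using sa FS_piece[OF _ l, of _ S] by (auto simp: b_def intro!: map_idI map_cong)
      have "set (a l) \<subseteq> hull" using sa Pc_hull by blast
      then show "same_type HL \<Delta>2 (a l) (b l)"
        using same_type_g[of "a l" \<Delta>2] same_type_refl[of HL \<Delta>2 "a l"] bl by (cases "act S l") simp_all
    next
      have "\<not> act S 0" by (simp add: act_def)
      then show "a 0 = b 0" using FS_piece[of _ 0 S] by (auto simp: b_def a_def intro!: map_idI[symmetric])
    qed
    then show ?thesis unfolding cb same_type_lenv[of _ _ _ _ "rho 0"] using p(2) by simp
  qed
  show ?thesis using ca_hull xs_ca main by blast
qed

definition pos :: "_ list \<Rightarrow> _ \<Rightarrow> nat" where
  "pos ca x = (SOME k. k < length ca \<and> ca ! k = x)"

lemma pos: "x \<in> set ca \<Longrightarrow> pos ca x < length ca \<and> ca ! pos ca x = x"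
  unfolding pos_def by (rule someI_ex) (simp add: in_set_conv_nth)

lemma FS_auto: "automorphism arf arr HL (FS S)"
  unfolding automorphism_def
proof (intro conjI allI impI)
  show "bij_betw (FS S) (dom HL) (dom HL)" using FS_bij by simp
next
  fix f as assume h: "length as = arf f \<and> set as \<subseteq> dom HL"
  let ?y = "fnI HL f as"
  have yh: "?y \<in> hull" using HL_closed h unfolding closed_def by simp
  obtain ca where ca: "set ca \<subseteq> hull" "set (?y # as) \<subseteq> set ca"
    and pr0: "\<forall>p. wf_fm arf arr p \<and> fv p \<subseteq> {..<length ca} \<longrightarrow>
        (sat HL (lenv (rho 0) ca) p \<longleftrightarrow> sat HL (lenv (rho 0) (map (FS S) ca)) p)"
    using FS_list[of "?y # as" S] yh h by (simp only: HL_simps set_simps insert_subset) blast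
  have pr: "wf_fm arf arr p \<Longrightarrow> fv p \<subseteq> {..<length ca} \<Longrightarrow>
        (sat HL (lenv (rho 0) ca) p \<longleftrightarrow> sat HL (lenv (rho 0) (map (FS S) ca)) p)" for p
    using pr0 by blast
  have ps: "pos ca x < length ca \<and> ca ! pos ca x = x" if "x \<in> set (?y # as)" for x
    by (rule pos) (use ca(2) that in blast)
  let ?p = "Eq (Fn f (map (\<lambda>x. Var (pos ca x)) as)) (Var (pos ca ?y))"
  have wf: "wf_fm arf arr ?p" using h by simp
  have fvp: "fv ?p \<subseteq> {..<length ca}" using ps by auto
  have m1: "map (\<lambda>x. lenv (rho 0) ca (pos ca x)) as = as"
    using ps by (auto simp: lenv_def intro!: map_idI)
  have m2: "map (\<lambda>x. lenv (rho 0) (map (FS S) ca) (pos ca x)) as = map (FS S) as"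
    using ps by (auto simp: lenv_def)
  have e1: "lenv (rho 0) ca (pos ca ?y) = ?y" using ps[of ?y] by (simp add: lenv_def)
  have e2: "lenv (rho 0) (map (FS S) ca) (pos ca ?y) = FS S ?y" using ps[of ?y] by (simp add: lenv_def)
  have "sat HL (lenv (rho 0) ca) ?p \<longleftrightarrow> fnI HL f as = ?y"
    by (simp only: sat.simps eval.simps map_map comp_def m1 e1)
  then have "sat HL (lenv (rho 0) ca) ?p" by simp
  then have "sat HL (lenv (rho 0) (map (FS S) ca)) ?p" using pr[OF wf fvp] by blast
  moreover have "sat HL (lenv (rho 0) (map (FS S) ca)) ?p \<longleftrightarrow> fnI HL f (map (FS S) as) = FS S ?y"
    by (simp only: sat.simps eval.simps map_map comp_def m2 e2)
  ultimately show "FS S (fnI HL f as) = fnI HL f (map (FS S) as)" by simp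
next
  fix r as assume h: "length as = arr r \<and> set as \<subseteq> dom HL"
  obtain ca where ca: "set ca \<subseteq> hull" "set as \<subseteq> set ca"
    and pr0: "\<forall>p. wf_fm arf arr p \<and> fv p \<subseteq> {..<length ca} \<longrightarrow>
        (sat HL (lenv (rho 0) ca) p \<longleftrightarrow> sat HL (lenv (rho 0) (map (FS S) ca)) p)"
    using FS_list[of as S] h by (simp only: HL_simps) blast
  have pr: "wf_fm arf arr p \<Longrightarrow> fv p \<subseteq> {..<length ca} \<Longrightarrow>
        (sat HL (lenv (rho 0) ca) p \<longleftrightarrow> sat HL (lenv (rho 0) (map (FS S) ca)) p)" for p
    using pr0 by blast
  have ps: "pos ca x < length ca \<and> ca ! pos ca x = x" if "x \<in> set as" for x
    by (rule pos) (use ca(2) that in blast)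
  let ?p = "Rel r (map (\<lambda>x. Var (pos ca x)) as) :: ('f,'r) fm"
  have wf: "wf_fm arf arr ?p" using h by simp
  have fvp: "fv ?p \<subseteq> {..<length ca}" using ps by auto
  have m1: "map (\<lambda>x. lenv (rho 0) ca (pos ca x)) as = as"
    using ps by (auto simp: lenv_def intro!: map_idI)
  have m2: "map (\<lambda>x. lenv (rho 0) (map (FS S) ca) (pos ca x)) as = map (FS S) as"
    using ps by (auto simp: lenv_def)
  have "sat HL (lenv (rho 0) ca) ?p = relI HL r as"
    by (simp only: sat.simps eval.simps map_map comp_def m1)
  moreover have "sat HL (lenv (rho 0) (map (FS S) ca)) ?p = relI HL r (map (FS S) as)"
    by (simp only: sat.simps eval.simps map_map comp_def m2)
  ultimately show "relI HL r as = relI HL r (map (FS S) as)" using pr[OF wf fvp] by simp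
qed

end


section \<open>Injective coding of terms\<close>

datatype 'l rtree = Nd 'l "'l rtree list"

fun ser :: "'l rtree \<Rightarrow> ('l + nat) list" where
  "ser (Nd l cs) = Inl l # Inr (length cs) # concat (map ser cs)"

definition good :: "'l rtree \<Rightarrow> bool" where
  "good c \<longleftrightarrow> (\<forall>t' r r'. ser c @ r = ser t' @ r' \<longrightarrow> c = t' \<and> r = r')"

lemma good_list:
  "length cs = length cs' \<Longrightarrow> (\<forall>c\<in>set cs. good c) \<Longrightarrow>
     concat (map ser cs) @ r = concat (map ser cs') @ r' \<Longrightarrow> cs = cs' \<and> r = r'"
proof (induction cs arbitrary: cs' r r')
  case Nil
  then show ?case by simp
next
  case (Cons c cs)
  obtain c' cs'' where cs': "cs' = c' # cs''" using Cons.prems(1) by (cases cs') auto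
  have eq: "ser c @ (concat (map ser cs) @ r) = ser c' @ (concat (map ser cs'') @ r')"
    using Cons.prems(3) cs' by simp
  have "good c" using Cons.prems(2) by simp
  then have "c = c' \<and> concat (map ser cs) @ r = concat (map ser cs'') @ r'"
    unfolding good_def using eq by blast
  moreover have "cs = cs'' \<and> r = r'"
  proof (rule Cons.IH)
    show "length cs = length cs''" using Cons.prems(1) cs' by simp
    show "\<forall>c\<in>set cs. good c" using Cons.prems(2) by simp
    show "concat (map ser cs) @ r = concat (map ser cs'') @ r'" using calculation by blast
  qed
  ultimately show ?case using cs' by simp
qed

lemma ser_good: "good t"
proof (induction t)
  case (Nd l cs)
  show ?case unfolding good_def
  proof (intro allI impI)
    fix t' r r' assume pre: "ser (Nd l cs) @ r = ser t' @ r'"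
    obtain l' cs' where t': "t' = Nd l' cs'" by (cases t')
    have h: "Inl l # Inr (length cs) # concat (map ser cs) @ r = Inl l' # Inr (length cs') # concat (map ser cs') @ r'"
      using pre t' by simp
    then have ll: "l = l'" "length cs = length cs'" by auto
    have rest: "concat (map ser cs) @ r = concat (map ser cs') @ r'" using h by simp
    have "cs = cs' \<and> r = r'" using good_list[OF ll(2) _ rest] Nd.IH by blast
    then show "Nd l cs = t' \<and> r = r'" using ll t' by simp
  qed
qed

lemma ser_prefix: "ser t @ r = ser t' @ r' \<Longrightarrow> t = t' \<and> r = r'"
  using ser_good[of t] unfolding good_def by blast

lemma ser_inj: "ser t = ser t' \<Longrightarrow> t = t'"
  using ser_prefix[of t "[]" t' "[]"] by simp

definition lset :: "'x list \<Rightarrow> (nat \<times> 'x) set" where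
  "lset xs = {(i, xs ! i) | i. i < length xs}"

lemma lset_inj: "lset xs = lset ys \<Longrightarrow> xs = ys"
proof -
  assume h: "lset xs = lset ys"
  have "{i. i < length xs} = {i. i < length ys}"
  proof -
    have "fst ` lset xs = {i. i < length xs}" "fst ` lset ys = {i. i < length ys}"
      unfolding lset_def by force+
    then show ?thesis using h by simp
  qed
  then have len: "length xs = length ys"
    by (metis lessThan_def lessThan_eq_iff)
  show ?thesis
  proof (rule nth_equalityI[OF len])
    fix i assume i: "i < length xs"
    then have "(i, xs ! i) \<in> lset ys" using h unfolding lset_def by auto
    then show "xs ! i = ys ! i" unfolding lset_def by auto
  qed
qed

type_synonym ('a,'f,'r) X = "'a + 'f + 'r + nat"

fun cd :: "nat \<times> (('f + 'r + nat) + nat) \<Rightarrow> ('a,'f,'r) X set" where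
  "cd (i, Inl (Inl f)) = {Inr (Inl f), Inr (Inr (Inr i))}"
| "cd (i, Inl (Inr (Inl r))) = {Inr (Inr (Inl r)), Inr (Inr (Inr i))}"
| "cd (i, Inl (Inr (Inr m))) = {Inr (Inr (Inr (prod_encode (i, 2 * m))))}"
| "cd (i, Inr k) = {Inr (Inr (Inr (prod_encode (i, 2 * k + 1))))}"

lemma eo_ne: "(2 * (m::nat) = Suc (2 * k)) = False" "(Suc (2 * k) = 2 * (m::nat)) = False"
  by presburger+

lemma cd_inj: "inj (cd :: nat \<times> (('f + 'r + nat) + nat) \<Rightarrow> ('a,'f,'r) X set)"
proof (rule injI)
  fix a b :: "nat \<times> (('f + 'r + nat) + nat)"
  assume h: "(cd a :: ('a,'f,'r) X set) = cd b"
  show "a = b"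
    using h by (cases a rule: cd.cases; cases b rule: cd.cases) (auto simp: doubleton_eq_iff prod_encode_eq eo_ne)
qed

fun tr0 :: "'f trm \<Rightarrow> ('f + 'r + nat) rtree" where
  "tr0 (Var v) = Nd (Inr (Inr v)) []"
| "tr0 (Fn f ts) = Nd (Inl f) (map tr0 ts)"

fun trf :: "('f,'r) fm \<Rightarrow> ('f + 'r + nat) rtree" where
  "trf (Eq s t) = Nd (Inr (Inr 0)) [tr0 s, tr0 t]"
| "trf (Rel r ts) = Nd (Inr (Inl r)) (map tr0 ts)"
| "trf (Neg p) = Nd (Inr (Inr 1)) [trf p]"
| "trf (Conj p q) = Nd (Inr (Inr 2)) [trf p, trf q]"
| "trf (Ex x p) = Nd (Inr (Inr (x + 3))) [trf p]"

fun trt :: "('f,'r) sf trm \<Rightarrow> ('f + 'r + nat) rtree" where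
  "trt (Var v) = Nd (Inr (Inr (2 * v))) []"
| "trt (Fn (Inl f) ts) = Nd (Inl f) (map trt ts)"
| "trt (Fn (Inr (x, p)) ts) = Nd (Inr (Inr (2 * x + 1))) (trf p # map trt ts)"

lemma map_inj_IH: "map f xs = map f ys \<Longrightarrow> (\<forall>x\<in>set xs. \<forall>y. f x = f y \<longrightarrow> x = y) \<Longrightarrow> xs = ys"
proof (induction xs arbitrary: ys)
  case (Cons a xs)
  then show ?case by (cases ys) auto
qed simp

lemma tr0_inj: "tr0 s = tr0 s' \<Longrightarrow> s = s'"
proof (induction s arbitrary: s')
  case (Var v)
  then show ?case by (cases s') auto
next
  case (Fn f ts)
  then show ?case by (cases s') (auto intro: map_inj_IH)
qed

lemma trf_inj: "trf p = trf p' \<Longrightarrow> p = p'"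
proof (induction p arbitrary: p')
  case (Eq s t)
  then show ?case by (cases p') (auto intro: tr0_inj)
next
  case (Rel r ts)
  then show ?case by (cases p') (auto intro: map_inj_IH tr0_inj)
next
  case (Neg p)
  then show ?case by (cases p') auto
next
  case (Conj p q)
  then show ?case by (cases p') auto
next
  case (Ex x p)
  then show ?case by (cases p') auto
qed

lemma trt_inj: "trt s = trt s' \<Longrightarrow> s = s'"
proof (induction s arbitrary: s' rule: trt.induct)
  case (1 v)
  then show ?case by (cases s' rule: trt.cases) auto
next
  case (2 f ts)
  then show ?case by (cases s' rule: trt.cases) (auto intro: map_inj_IH)
next
  case (3 x p ts)
  then show ?case by (cases s' rule: trt.cases) (auto intro: map_inj_IH trf_inj)
qed

definition tcode :: "('f,'r) sf trm \<Rightarrow> ('a,'f,'r) X set set" where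
  "tcode t = cd ` lset (ser (trt t))"

lemma tcode_inj: "inj (tcode :: ('f,'r) sf trm \<Rightarrow> ('a,'f,'r) X set set)"
proof (rule injI)
  fix s t :: "('f,'r) sf trm"
  assume "(tcode s :: ('a,'f,'r) X set set) = tcode t"
  then have "lset (ser (trt s)) = lset (ser (trt t))"
    unfolding tcode_def using cd_inj inj_image_eq_iff by metis
  then show "s = t" using lset_inj ser_inj trt_inj by metis
qed


section \<open>Isomorphic copies\<close>

definition iso_copy :: "('x \<Rightarrow> 'y) \<Rightarrow> ('x,'f,'r) struct \<Rightarrow> ('y,'f,'r) struct" where
  "iso_copy p S = \<lparr>dom = p ` dom S,
     fnI = \<lambda>f as. p (fnI S f (map (inv_into (dom S) p) as)),
     relI = \<lambda>r as. relI S r (map (inv_into (dom S) p) as)\<rparr>"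

lemma ic_simps[simp]: "dom (iso_copy p S) = p ` dom S"
  "fnI (iso_copy p S) f as = p (fnI S f (map (inv_into (dom S) p) as))"
  "relI (iso_copy p S) r as = relI S r (map (inv_into (dom S) p) as)"
  by (simp_all add: iso_copy_def)

lemma ic_eval:
  assumes "inj_on p (dom S)" "closed S" "range e \<subseteq> dom S"
  shows "eval (iso_copy p S) (p \<circ> e) t = p (eval S e t)"
proof (induction t)
  case (Fn f ts)
  have "map (inv_into (dom S) p) (map (eval (iso_copy p S) (p \<circ> e)) ts) = map (eval S e) ts"
    using Fn eval_in_dom[OF assms(2,3)] assms(1) by (auto simp: inv_into_f_f comp_def)
  then show ?case by (simp only: eval.simps ic_simps)
qed simp

lemma ic_sat:
  assumes "inj_on p (dom S)" "closed S"
  shows "range e \<subseteq> dom S \<Longrightarrow> sat (iso_copy p S) (p \<circ> e) q = sat S e q"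
proof (induction q arbitrary: e)
  case (Eq s t)
  have a: "eval (iso_copy p S) (p \<circ> e) s = p (eval S e s)" "eval (iso_copy p S) (p \<circ> e) t = p (eval S e t)"
    using ic_eval[OF assms Eq] by auto
  have "p (eval S e s) = p (eval S e t) \<longleftrightarrow> eval S e s = eval S e t"
    using eval_in_dom[OF assms(2) Eq] assms(1) by (auto simp: inj_on_eq_iff)
  then show ?case by (simp only: sat.simps a)
next
  case (Rel r ts)
  have "map (inv_into (dom S) p) (map (eval (iso_copy p S) (p \<circ> e)) ts) = map (eval S e) ts"
    using ic_eval[OF assms Rel] eval_in_dom[OF assms(2) Rel] assms(1) by (auto simp: inv_into_f_f)
  then show ?case by (simp only: sat.simps ic_simps)
next
  case (Ex x q)
  have eq: "(p \<circ> e)(x := p b) = p \<circ> (e(x := b))" for b by auto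
  have "(\<exists>a\<in>p ` dom S. sat (iso_copy p S) ((p \<circ> e)(x := a)) q) \<longleftrightarrow>
        (\<exists>b\<in>dom S. sat (iso_copy p S) ((p \<circ> e)(x := p b)) q)" by blast
  also have "\<dots> \<longleftrightarrow> (\<exists>b\<in>dom S. sat S (e(x := b)) q)"
  proof (intro bex_cong refl)
    fix b assume b: "b \<in> dom S"
    then have "range (e(x := b)) \<subseteq> dom S" using Ex.prems by auto
    then show "sat (iso_copy p S) ((p \<circ> e)(x := p b)) q = sat S (e(x := b)) q"
      unfolding eq using Ex.IH by blast
  qed
  finally show ?case by (simp only: sat.simps ic_simps)
qed simp_all

lemma ic_sat2:
  assumes "inj_on p (dom S)" "closed S" "range e \<subseteq> dom (iso_copy p S)"
  shows "sat (iso_copy p S) e q = sat S (inv_into (dom S) p \<circ> e) q"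
proof -
  have ex: "e x \<in> p ` dom S" for x using assms(3) by auto
  then have r: "range (inv_into (dom S) p \<circ> e) \<subseteq> dom S" by (auto intro: inv_into_into)
  have "p \<circ> (inv_into (dom S) p \<circ> e) = e" by (rule ext) (simp add: f_inv_into_f[OF ex])
  then show ?thesis using ic_sat[OF assms(1,2) r] by simp
qed

lemma ic_struct:
  assumes "closed S"
  shows "is_structure arf (iso_copy p S)"
  unfolding is_structure_def
proof (intro conjI allI impI)
  show "dom (iso_copy p S) \<noteq> {}" using assms unfolding closed_def by simp
  fix f as assume "length as = arf f \<and> set as \<subseteq> dom (iso_copy p S)"
  then have "set (map (inv_into (dom S) p) as) \<subseteq> dom S" by (auto intro: inv_into_into)
  then have "fnI S f (map (inv_into (dom S) p) as) \<in> dom S" using assms unfolding closed_def by blast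
  then show "fnI (iso_copy p S) f as \<in> dom (iso_copy p S)" by simp
qed

lemma ic_auto:
  assumes inj: "inj_on p (dom S)" and cl: "closed S" and au: "automorphism arf arr S h"
  shows "automorphism arf arr (iso_copy p S) (p \<circ> h \<circ> inv_into (dom S) p)"
  unfolding automorphism_def
proof (intro conjI allI impI)
  let ?i = "inv_into (dom S) p"
  have hb: "bij_betw h (dom S) (dom S)" using au unfolding automorphism_def by blast
  have pb: "bij_betw p (dom S) (p ` dom S)" using inj by (simp add: bij_betw_imageI)
  have ib: "bij_betw ?i (p ` dom S) (dom S)" using bij_betw_inv_into[OF pb] .
  show "bij_betw (p \<circ> h \<circ> ?i) (dom (iso_copy p S)) (dom (iso_copy p S))"
    using bij_betw_trans[OF bij_betw_trans[OF ib hb] pb] by (simp add: comp_assoc)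
  have hd: "h x \<in> dom S" if "x \<in> dom S" for x by (rule bij_betw_apply[OF hb that])
  have ii: "?i ((p \<circ> h \<circ> ?i) a) = h (?i a)" if "a \<in> p ` dom S" for a
    using inv_into_f_f[OF inj hd[OF inv_into_into[OF that]]] by simp
  fix f as assume h: "length as = arf f \<and> set as \<subseteq> dom (iso_copy p S)"
  have s: "set (map ?i as) \<subseteq> dom S" using h by (auto intro: inv_into_into)
  have "(p \<circ> h \<circ> ?i) (fnI (iso_copy p S) f as) = p (h (fnI S f (map ?i as)))"
    using cl s inv_into_f_f[OF inj] unfolding closed_def by simp
  also have "\<dots> = p (fnI S f (map h (map ?i as)))"
    using au s h unfolding automorphism_def by simp
  also have "\<dots> = p (fnI S f (map ?i (map (p \<circ> h \<circ> ?i) as)))"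
  proof -
    have "map ?i (map (p \<circ> h \<circ> ?i) as) = map h (map ?i as)"
      unfolding map_map by (rule map_cong[OF refl]) (use ii h in auto)
    then show ?thesis by (simp only:)
  qed
  also have "\<dots> = fnI (iso_copy p S) f (map (p \<circ> h \<circ> ?i) as)" by simp
  finally show "(p \<circ> h \<circ> ?i) (fnI (iso_copy p S) f as) = fnI (iso_copy p S) f (map (p \<circ> h \<circ> ?i) as)" .
next
  let ?i = "inv_into (dom S) p"
  have hb: "bij_betw h (dom S) (dom S)" using au unfolding automorphism_def by blast
  have hd: "h x \<in> dom S" if "x \<in> dom S" for x by (rule bij_betw_apply[OF hb that])
  have ii: "?i ((p \<circ> h \<circ> ?i) a) = h (?i a)" if "a \<in> p ` dom S" for a
    using inv_into_f_f[OF inj hd[OF inv_into_into[OF that]]] by simp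
  fix r as assume h: "length as = arr r \<and> set as \<subseteq> dom (iso_copy p S)"
  have s: "set (map ?i as) \<subseteq> dom S" using h by (auto intro: inv_into_into)
  have "map ?i (map (p \<circ> h \<circ> ?i) as) = map h (map ?i as)"
    unfolding map_map by (rule map_cong[OF refl]) (use ii h in auto)
  then have "relI (iso_copy p S) r (map (p \<circ> h \<circ> ?i) as) = relI S r (map h (map ?i as))"
    by (simp only: ic_simps)
  also have "\<dots> = relI S r (map ?i as)"
    using au s h unfolding automorphism_def by simp
  finally show "relI (iso_copy p S) r as = relI (iso_copy p S) r (map (p \<circ> h \<circ> ?i) as)" by simp
qed

lemma auto_cong:
  assumes au: "automorphism arf arr T h" and st: "is_structure arf T"
    and eq: "\<And>x. x \<in> dom T \<Longrightarrow> h x = h' x"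
  shows "automorphism arf arr T h'"
  unfolding automorphism_def
proof (intro conjI allI impI)
  show "bij_betw h' (dom T) (dom T)"
    using au eq bij_betw_cong unfolding automorphism_def by blast
  fix f as assume h: "length as = arf f \<and> set as \<subseteq> dom T"
  have "fnI T f as \<in> dom T" using st h unfolding is_structure_def by blast
  moreover have "map h as = map h' as" using h eq by auto
  ultimately show "h' (fnI T f as) = fnI T f (map h' as)"
    using au h eq unfolding automorphism_def by metis
next
  fix r as assume h: "length as = arr r \<and> set as \<subseteq> dom T"
  have "map h as = map h' as" using h eq by auto
  then show "relI T r as = relI T r (map h' as)"
    using au h unfolding automorphism_def by metis
qed

lemma auto_id: "is_structure arf T \<Longrightarrow> automorphism arf arr T id"
  unfolding automorphism_def by simp


context cons2
begin

lemma act_Suc: "k < n \<Longrightarrow> act S (Suc k) \<longleftrightarrow> k \<in> S" and act_0: "\<not> act S 0"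
  by (auto simp: act_def)

definition B where "B i = (if i = 0 then Pc 0 \<union> Pc 1 else Pc (Suc i))"

lemma B_hull: "B i \<subseteq> hull" unfolding B_def using Pc_hull by auto

lemma B_piece: "y \<in> B k \<Longrightarrow> k < n \<Longrightarrow> y \<in> Pc l \<Longrightarrow> l < Suc n \<Longrightarrow>
   (k = 0 \<and> l \<le> 1) \<or> (l = Suc k)"
proof -
  assume h: "y \<in> B k" "k < n" "y \<in> Pc l" "l < Suc n"
  show ?thesis
  proof (cases "k = 0")
    case True
    then have "y \<in> Pc 0 \<or> y \<in> Pc 1" using h(1) by (simp add: B_def)
    then have "l = 0 \<or> l = 1" using piece_uniq[OF h(3) _ h(4)] n1 by fastforce
    then show ?thesis using True by auto
  next
    case False
    then have "y \<in> Pc (Suc k)" using h(1) by (simp add: B_def)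
    then have "l = Suc k" using piece_uniq[OF h(3) _ h(4)] h(2) by simp
    then show ?thesis by simp
  qed
qed

lemma B_cover: "y \<in> hull \<Longrightarrow> \<exists>k<n. y \<in> B k"
proof -
  assume y: "y \<in> hull"
  obtain l where l: "l < Suc n" "y \<in> Pc l" using piece_ex[OF y] by blast
  show ?thesis
  proof (cases "l \<le> 1")
    case True
    then have "y \<in> B 0" using l by (auto simp: B_def le_Suc_eq)
    moreover have "0 < n" using n1 by simp
    ultimately show ?thesis by blast
  next
    case False
    then have "y \<in> B (l - 1)" "l - 1 < n" using l by (auto simp: B_def)
    then show ?thesis by blast
  qed
qed

lemma B_uniq: "y \<in> B k \<Longrightarrow> y \<in> B k' \<Longrightarrow> k < n \<Longrightarrow> k' < n \<Longrightarrow> k = k'"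
proof -
  assume h: "y \<in> B k" "y \<in> B k'" "k < n" "k' < n"
  have yh: "y \<in> hull" using h B_hull by blast
  obtain l where l: "l < Suc n" "y \<in> Pc l" using piece_ex[OF yh] by blast
  show "k = k'" using B_piece[OF h(1) h(3) l(2) l(1)] B_piece[OF h(2) h(4) l(2) l(1)] by auto
qed

lemma dd_B: "i < n \<Longrightarrow> dd i 0 \<in> B i"
  using dd_Pc[of i 0] by (auto simp: B_def)

lemma FS_B: "y \<in> B k \<Longrightarrow> k < n \<Longrightarrow> FS S y = (if k \<in> S then FS {k} y else y)"
proof -
  assume h: "y \<in> B k" "k < n"
  have yh: "y \<in> hull" using h B_hull by blast
  obtain l where l: "l < Suc n" "y \<in> Pc l" using piece_ex[OF yh] by blast
  show ?thesis
  proof (cases "l = Suc k")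
    case True
    then show ?thesis using FS_piece[OF l(2) l(1)] act_Suc[OF h(2)] by simp
  next
    case False
    then have "l = 0" using B_piece[OF h l(2) l(1)] by auto
    then show ?thesis using FS_piece[OF l(2) l(1)] act_0 by simp
  qed
qed

lemma final:
  fixes G :: "('a,'f,'r) X set set \<Rightarrow> 'b"
  assumes G: "inj G" and TM: "\<forall>p\<in>T. wf_fm arf arr p \<and> (\<forall>e. range e \<subseteq> dom M \<longrightarrow> sat M e p)"
  shows "\<exists>(M' :: ('b,'f,'r) struct) A' f1 f2.
       is_model arf arr T M' \<and> is_partition M' n A' \<and> (\<forall>i<n. A' i \<noteq> {}) \<and>
       (\<forall>i<n. automorphism arf arr M' (f1 i) \<and> automorphism arf arr M' (f2 i) \<and>
              (\<exists>x \<in> dom M'. f1 i x \<noteq> f2 i x) \<and>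
              (\<forall>x \<in> dom M' - A' i. f1 i x = f2 i x)) \<and>
       (\<forall>S. automorphism arf arr M' (glue n A' f1 f2 S))"
proof -
  define tm where "tm x = (SOME t. x = eval N rho t)" for x
  have tmi: "inj_on tm hull"
  proof (rule inj_onI)
    fix x y assume "x \<in> hull" "y \<in> hull" "tm x = tm y"
    then show "x = y" using hull_rep unfolding tm_def by metis
  qed
  define pi where "pi x = G (tcode (tm x))" for x
  have pinj: "inj_on pi hull"
  proof (rule inj_onI)
    fix x y assume h: "x \<in> hull" "y \<in> hull" "pi x = pi y"
    then have "tcode (tm x) = (tcode (tm y) :: ('a,'f,'r) X set set)"
      using G unfolding pi_def by (simp add: inj_eq)
    then have "tm x = tm y" by (rule injD[OF tcode_inj])
    then show "x = y" using tmi h by (simp add: inj_on_eq_iff)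
  qed
  have pinj': "inj_on pi (dom HL)" using pinj by simp
  define M' where "M' = iso_copy pi HL"
  define A' where "A' i = pi ` B i" for i
  define f1 where "f1 i = (id :: 'b \<Rightarrow> 'b)" for i :: nat
  define f2 where "f2 i = pi \<circ> FS {i} \<circ> inv_into (dom HL) pi" for i
  have dM': "dom M' = pi ` hull" unfolding M'_def by simp
  have sM': "is_structure arf M'" unfolding M'_def by (rule ic_struct[OF HL_closed])
  have invpi: "inv_into (dom HL) pi (pi y) = y" if "y \<in> hull" for y
    using inv_into_f_f[OF pinj] that by simp
  have model: "is_model arf arr T M'"
    unfolding is_model_def
  proof (intro conjI sM' ballI allI impI)
    fix p and e :: "nat \<Rightarrow> 'b" assume p: "p \<in> T" and e: "range e \<subseteq> dom M'"
    have wp: "wf_fm arf arr p" and sp: "\<And>e. range e \<subseteq> dom M \<Longrightarrow> sat M e p" using TM p by auto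
    let ?e = "inv_into (dom HL) pi \<circ> e"
    have ex: "e x \<in> pi ` hull" for x using e dM' by auto
    have rh: "range ?e \<subseteq> hull" using ex by (auto intro: inv_into_into)
    have "sat M' e p = sat HL ?e p" unfolding M'_def
      by (rule ic_sat2[OF pinj' HL_closed]) (use e M'_def in simp)
    also have "\<dots> = eventually (\<lambda>P. sat M1 (\<lambda>v. ?e v P) p) U" by (rule los_HL[OF rh])
    also have "\<dots> = True"
    proof -
      have "sat M1 (\<lambda>v. ?e v P) p" for P
      proof -
        have r: "range (\<lambda>v. ?e v P) \<subseteq> dom M" using rh hull_PI by auto
        show ?thesis using sat_M1[OF wp r] sp[OF r] by simp
      qed
      then show ?thesis by simp
    qed
    finally show "sat M' e p" by simp
  qed
  have partition: "is_partition M' n A'"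
    unfolding is_partition_def
  proof (intro conjI allI impI)
    show "(\<Union>i<n. A' i) = dom M'"
    proof
      show "(\<Union>i<n. A' i) \<subseteq> dom M'" unfolding A'_def dM' using B_hull by auto
      show "dom M' \<subseteq> (\<Union>i<n. A' i)" unfolding A'_def dM' using B_cover by blast
    qed
    fix i j assume ij: "i < n" "j < n" "i \<noteq> j"
    show "A' i \<inter> A' j = {}"
    proof (rule ccontr)
      assume "A' i \<inter> A' j \<noteq> {}"
      then obtain y y' where y: "y \<in> B i" "y' \<in> B j" "pi y = pi y'" unfolding A'_def by blast
      then have "y = y'" using pinj B_hull by (meson inj_onD subsetD)
      then show False using B_uniq y ij by blast
    qed
  qed
  have ne: "\<forall>i<n. A' i \<noteq> {}" unfolding A'_def using dd_B by blast
  have f1a: "automorphism arf arr M' (f1 i)" for i unfolding f1_def by (rule auto_id[OF sM'])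
  have f2a: "automorphism arf arr M' (f2 i)" for i
    unfolding f2_def M'_def by (rule ic_auto[OF pinj' HL_closed FS_auto])
  have wit: "\<exists>x \<in> dom M'. f1 i x \<noteq> f2 i x" if i: "i < n" for i
  proof -
    have d: "dd i 0 \<in> Pc (Suc i)" using dd_Pc[of i 0] i by simp
    have "FS {i} (dd i 0) = g (dd i 0)" using FS_piece[OF d] act_Suc[OF i] i by simp
    also have "\<dots> = dd i 1" using g_dd by simp
    finally have "f2 i (pi (dd i 0)) = pi (dd i 1)" unfolding f2_def using invpi dd_hull by simp
    moreover have "pi (dd i 1) \<noteq> pi (dd i 0)" using pinj dd_hull dd_neq by (metis inj_onD)
    moreover have "pi (dd i 0) \<in> dom M'" using dM' dd_hull by simp
    ultimately show ?thesis unfolding f1_def by (metis id_apply)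
  qed
  have outside: "\<forall>x \<in> dom M' - A' i. f1 i x = f2 i x" if i: "i < n" for i
  proof
    fix x assume x: "x \<in> dom M' - A' i"
    then obtain y where y0: "y \<in> hull" "x = pi y" using dM' by auto
    then have "y \<notin> B i" using x A'_def by auto
    note y = y0 this
    obtain k where k: "k < n" "y \<in> B k" using B_cover[OF y(1)] by blast
    have "k \<noteq> i" using k y by auto
    then have "FS {i} y = y" using FS_B[OF k(2) k(1), of "{i}"] FS_B[OF k(2) k(1), of "{k}"] by simp
    then show "f1 i x = f2 i x" unfolding f1_def f2_def using y invpi by simp
  qed
  have glue_auto: "automorphism arf arr M' (glue n A' f1 f2 S)" for S
  proof (rule auto_cong[OF _ sM'])
    show "automorphism arf arr M' (pi \<circ> FS S \<circ> inv_into (dom HL) pi)"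
      unfolding M'_def by (rule ic_auto[OF pinj' HL_closed FS_auto])
    fix x assume "x \<in> dom M'"
    then obtain y where y: "y \<in> hull" "x = pi y" using dM' by auto
    obtain k where k: "k < n" "y \<in> B k" using B_cover[OF y(1)] by blast
    have xk: "x \<in> A' k" using k y A'_def by auto
    have the: "(THE i. i < n \<and> x \<in> A' i) = k"
    proof (rule the_equality)
      show "k < n \<and> x \<in> A' k" using k xk by simp
      fix j assume j: "j < n \<and> x \<in> A' j"
      then obtain y' where "y' \<in> B j" "x = pi y'" unfolding A'_def by auto
      then have "y' = y" using pinj y B_hull by (meson inj_onD subsetD)
      then show "j = k" using B_uniq \<open>y' \<in> B j\<close> k j by blast
    qed
    have "glue n A' f1 f2 S x = (if k \<in> S then f2 k x else f1 k x)"
      unfolding glue_def using the k xk by (auto simp: Let_def)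
    also have "\<dots> = pi (FS S y)"
      using FS_B[OF k(2) k(1), of S] y invpi unfolding f1_def f2_def by simp
    finally show "(pi \<circ> FS S \<circ> inv_into (dom HL) pi) x = glue n A' f1 f2 S x"
      using y invpi by simp
  qed
  show ?thesis
    by (intro exI[of _ M'] exI[of _ A'] exI[of _ f1] exI[of _ f2] conjI model partition ne allI impI
        f1a f2a wit outside glue_auto)
qed

end

theorem mainTheorem6:
  fixes T :: "('f, 'r) fm set" and arf :: "'f \<Rightarrow> nat" and arr :: "'r \<Rightarrow> nat"
  assumes "fo_theory arf arr T"
    and "semi_decomposable TYPE('a) arf arr T"
    and "\<exists>g :: ('a + 'f + 'r + nat) set set \<Rightarrow> 'b. inj g"
  shows "pseudo_decomposable TYPE('b) arf arr T"
proof -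
  obtain G :: "('a + 'f + 'r + nat) set set \<Rightarrow> 'b" where G: "inj G" using assms(3) by blast
  show ?thesis
    unfolding pseudo_decomposable_def
  proof (intro allI impI)
    fix n :: nat assume n: "1 \<le> n"
    obtain M :: "('a,'f,'r) struct" and A where
      H: "is_model arf arr T M" "is_partition M (Suc n) A" "\<forall>i<Suc n. infinite (A i)"
      and P: "\<forall>\<Delta>1. finite \<Delta>1 \<and> (\<forall>p \<in> \<Delta>1. wf_fm arf arr p) \<longrightarrow>
          (\<exists>\<Delta>2. finite \<Delta>2 \<and> (\<forall>p \<in> \<Delta>2. wf_fm arf arr p) \<and>
             (\<forall>a b :: nat \<Rightarrow> 'a list.
                (\<forall>l<Suc n. set (a l) \<subseteq> A l \<and> set (b l) \<subseteq> A l \<and> same_type M \<Delta>2 (a l) (b l))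
                \<and> a 0 = b 0
                \<longrightarrow> same_type M \<Delta>1 (concat (map a [0..<Suc n])) (concat (map b [0..<Suc n]))))"
      using assms(2)[unfolded semi_decomposable_def, rule_format, of "Suc n"] by auto
    have sd: "sdprop arf arr (Suc n) M A" using P unfolding sdprop_def .
    have strM: "is_structure arf M" using H(1) unfolding is_model_def by blast
    interpret C: cons2 arf arr M A n
      by unfold_locales (use n strM H sd in auto)
    have TM: "\<forall>p\<in>T. wf_fm arf arr p \<and> (\<forall>e. range e \<subseteq> dom M \<longrightarrow> sat M e p)"
      using assms(1) H(1) unfolding fo_theory_def sentence_def is_model_def by blast
    show "\<exists>(M :: ('b, 'f, 'r) struct) A f1 f2.
       is_model arf arr T M \<and> is_partition M n A \<and> (\<forall>i<n. A i \<noteq> {}) \<and>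
       (\<forall>i<n. automorphism arf arr M (f1 i) \<and> automorphism arf arr M (f2 i) \<and>
              (\<exists>x \<in> dom M. f1 i x \<noteq> f2 i x) \<and>
              (\<forall>x \<in> dom M - A i. f1 i x = f2 i x)) \<and>
       (\<forall>S. automorphism arf arr M (glue n A f1 f2 S))"
      using C.final[OF G TM] .
  qed
qed

end
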